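(* Let $\alpha>0$, $r>0$, $L>0$, $f\in\mathcal{A}_{\alpha,r}(L)$, and assume $\Phi^{K_n}\in\mathbb{L}_2(\mathbb{R})$ for every $h_n>0$. Then, as $h_n\to0$, $$\sup_{x\in\mathbb{R}}\big|E_f\hat f_n(x)-f(x)\big|^2\le\frac{L}{2\pi\alpha r}h_n^{r-1}\exp\Big(-\frac{2\alpha}{h_n^r}\Big)(1+o(1)),$$ and for every $h_n>0$, $$\|E_f\hat f_n-f\|_2^2\le L\exp\Big(-\frac{2\alpha}{h_n^r}\Big).$$
   Context: Observations $Y_i=X_i+\varepsilon_i$, $i=1,\dots,n$, with $X_i$ i.i.d. with density $f$, $\varepsilon_i$ i.i.d. with known density $f^\varepsilon$ and characteristic function $\Phi^\varepsilon$, independent of the $X_i$; $E_f$ is expectation under the law of the $Y_i$ when $X_i$ have density $f$. $\Phi^g(u)=\int g(x)e^{ixu}dx$. $\mathcal{A}_{\alpha,r}(L)$ is the set of probability densities $f$ on $\mathbb{R}$ with $\int|\Phi^f(u)|^2e^{2\alpha|u|^r}du\le2\pi L$. Kernel estimator: $\hat f_n(x)=\frac{1}{nh_n}\sum_{i=1}^nK_n\big(\frac{x-Y_i}{h_n}\big)$, $h_n>0$, with $K_n$ the inverse Fourier transform of $\Phi^{K_n}(u)=I(|u|\le1)/\Phi^\varepsilon(u/h_n)$. *)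

theory Defs
  imports "HOL-Analysis.Analysis"
begin

definition prob_density :: "(real \<Rightarrow> real) \<Rightarrow> bool" where
  "prob_density g \<longleftrightarrow> g \<in> borel_measurable borel \<and> (\<forall>x. 0 \<le> g x)
      \<and> integrable lborel g \<and> integral\<^sup>L lborel g = 1"

definition char_fun :: "(real \<Rightarrow> real) \<Rightarrow> real \<Rightarrow> complex" where
  "char_fun g u = (\<integral>x. complex_of_real (g x) * exp (\<i> * complex_of_real (x * u)) \<partial>lborel)"

definition class_A :: "real \<Rightarrow> real \<Rightarrow> real \<Rightarrow> (real \<Rightarrow> real) set" where
  "class_A \<alpha> r L = {f. prob_density f \<and>
     (\<integral>\<^sup>+u. ennreal ((cmod (char_fun f u))\<^sup>2 * exp (2 * \<alpha> * (\<bar>u\<bar> powr r))) \<partial>lborel)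
        \<le> ennreal (2 * pi * L)}"

definition PhiK :: "(real \<Rightarrow> real) \<Rightarrow> real \<Rightarrow> real \<Rightarrow> complex" where
  "PhiK fe h u = (if \<bar>u\<bar> \<le> 1 then 1 / char_fun fe (u / h) else 0)"

definition Kn :: "(real \<Rightarrow> real) \<Rightarrow> real \<Rightarrow> real \<Rightarrow> complex" where
  "Kn fe h z = (1 / (2 * pi)) * (\<integral>u. exp (- \<i> * complex_of_real (u * z)) * PhiK fe h u \<partial>lborel)"

definition law_Y :: "(real \<Rightarrow> real) \<Rightarrow> (real \<Rightarrow> real) \<Rightarrow> real measure" where
  "law_Y f fe = distr (density lborel (\<lambda>x. ennreal (f x)) \<Otimes>\<^sub>M density lborel (\<lambda>e. ennreal (fe e)))
                      lborel (\<lambda>(x, e). x + e)"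

definition E_fhat :: "(real \<Rightarrow> real) \<Rightarrow> (real \<Rightarrow> real) \<Rightarrow> real \<Rightarrow> real \<Rightarrow> complex" where
  "E_fhat f fe h x = (1 / complex_of_real h) * (\<integral>y. Kn fe h ((x - y) / h) \<partial>law_Y f fe)"

end

theory Submission
  imports Defs "HOL-Probability.Probability" "HOL-Real_Asymp.Real_Asymp"
begin

definition Hf :: "real \<Rightarrow> real \<Rightarrow> real \<Rightarrow> real" where
  "Hf c r v = v powr (1 - r) * exp (- c * v powr r) / (c * r)"

definition Hd :: "real \<Rightarrow> real \<Rightarrow> real \<Rightarrow> real" where
  "Hd c r v = exp (- c * v powr r) * (1 - (1 - r) * v powr (- r) / (c * r))"

lemma Hf_deriv:
  assumes c: "c > 0" and r: "r > 0" and v: "v > 0"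
  shows "((\<lambda>v. - Hf c r v) has_real_derivative Hd c r v) (at v)"
proof -
  have d1: "((\<lambda>v. v powr (1 - r)) has_real_derivative (1 - r) * v powr (1 - r - 1)) (at v)"
    using v by (rule has_real_derivative_powr)
  have d2: "((\<lambda>v. v powr r) has_real_derivative r * v powr (r - 1)) (at v)"
    using v by (rule has_real_derivative_powr)
  have d3: "((\<lambda>v. exp (- c * v powr r)) has_real_derivative exp (- c * v powr r) * (- c * (r * v powr (r - 1)))) (at v)"
    using v by (intro derivative_eq_intros d2) auto
  have d4: "((\<lambda>v. - (v powr (1 - r) * exp (- c * v powr r) / (c * r))) has_real_derivative
      - (((1 - r) * v powr (1 - r - 1) * exp (- c * v powr r) + v powr (1 - r) * (exp (- c * v powr r) * (- c * (r * v powr (r - 1))))) / (c * r))) (at v)"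
    using v c r by (intro derivative_eq_intros d1 d3) auto
  have e: "v powr (1 - r) * v powr (r - 1) = 1"
    using v by (simp add: powr_add[symmetric])
  have "- (((1 - r) * v powr (1 - r - 1) * exp (- c * v powr r) + v powr (1 - r) * (exp (- c * v powr r) * (- c * (r * v powr (r - 1))))) / (c * r))
      = Hd c r v"
  proof -
    have "v powr (1 - r) * (exp (- c * v powr r) * (- c * (r * v powr (r - 1)))) = - c * r * exp (- c * v powr r) * (v powr (1 - r) * v powr (r - 1))"
      by (simp add: algebra_simps)
    also have "\<dots> = - c * r * exp (- c * v powr r)" using e by simp
    finally have *: "v powr (1 - r) * (exp (- c * v powr r) * (- c * (r * v powr (r - 1)))) = - c * r * exp (- c * v powr r)" .
    show ?thesis unfolding Hd_def * using c r by (simp add: field_simps)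
  qed
  with d4 show ?thesis unfolding Hf_def by simp
qed

lemma Hf_lim: "c > 0 \<Longrightarrow> r > 0 \<Longrightarrow> (Hf c r \<longlongrightarrow> 0) at_top"
  unfolding Hf_def[abs_def] by real_asymp

lemma tail_bound:
  fixes c r A :: real
  defines "k \<equiv> max 0 (1 - r) / (c * r)"
  assumes c: "c > 0" and r: "r > 0" and A: "A > 0" and kq: "k * A powr (- r) < 1"
  shows "(\<integral>\<^sup>+v. ennreal (exp (- c * v powr r)) * indicator {A..} v \<partial>lborel)
     \<le> ennreal (Hf c r A / (1 - k * A powr (- r)))"
proof -
  define q where "q = 1 - k * A powr (- r)"
  have q: "q > 0" using kq by (simp add: q_def)
  have k0: "k \<ge> 0" using c r by (simp add: k_def)
  have low: "exp (- c * v powr r) * q \<le> Hd c r v" if v: "A \<le> v" for v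
  proof -
    have vp: "v > 0" using A v by simp
    have "v powr (- r) \<le> A powr (- r)"
      using A v r by (intro powr_mono2') auto
    hence "k * v powr (- r) \<le> k * A powr (- r)" using k0 by (simp add: mult_left_mono)
    moreover have "(1 - r) * v powr (- r) / (c * r) \<le> k * v powr (- r)"
    proof -
      have "(1 - r) / (c * r) \<le> k" unfolding k_def using c r by (intro divide_right_mono) auto
      then have "(1 - r) / (c * r) * v powr (- r) \<le> k * v powr (- r)" by (rule mult_right_mono) simp
      then show ?thesis by simp
    qed
    ultimately have "q \<le> 1 - (1 - r) * v powr (- r) / (c * r)" unfolding q_def by linarith
    then show ?thesis unfolding Hd_def by (simp add: mult_left_mono)
  qed
  have FTC: "(\<integral>\<^sup>+x. ennreal (Hd c r x / q) * indicator {A..} x \<partial>lborel) = 0 - (- Hf c r A / q)"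
  proof (rule nn_integral_FTC_atLeast)
    show "(\<lambda>x. Hd c r x / q) \<in> borel_measurable borel" unfolding Hd_def by measurable
    show "((\<lambda>x. - Hf c r x / q) has_real_derivative Hd c r x / q) (at x)" if "A \<le> x" for x
      using that A by (intro DERIV_cdivide Hf_deriv[OF c r]) auto
    show "0 \<le> Hd c r x / q" if "A \<le> x" for x
      using low[OF that] q by (intro divide_nonneg_pos) (auto intro!: order.trans[OF _ low[OF that]])
    show "((\<lambda>x. - Hf c r x / q) \<longlongrightarrow> 0) at_top"
      using tendsto_divide[OF tendsto_minus[OF Hf_lim[OF c r]] tendsto_const[of q]] q by simp
  qed
  have "(\<integral>\<^sup>+v. ennreal (exp (- c * v powr r)) * indicator {A..} v \<partial>lborel)
      \<le> (\<integral>\<^sup>+x. ennreal (Hd c r x / q) * indicator {A..} x \<partial>lborel)"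
    using low q by (intro nn_integral_mono) (auto split: split_indicator simp: field_simps intro!: ennreal_leI)
  also have "\<dots> = ennreal (Hf c r A / q)" using FTC by simp
  finally show ?thesis by (simp add: q_def)
qed

lemma tail_sym:
  fixes c r A :: real
  defines "k \<equiv> max 0 (1 - r) / (c * r)"
  assumes c: "c > 0" and r: "r > 0" and A: "A > 0" and kq: "k * A powr (- r) < 1"
  shows "(\<integral>\<^sup>+v. ennreal (indicator {v. A < \<bar>v\<bar>} v * exp (- c * \<bar>v\<bar> powr r)) \<partial>lborel)
     \<le> ennreal (2 * (Hf c r A / (1 - k * A powr (- r))))"
proof -
  define g where "g v = ennreal (exp (- c * v powr r)) * indicator {A..} v" for v
  have gm[measurable]: "g \<in> borel_measurable borel" unfolding g_def by measurable
  have "(\<integral>\<^sup>+v. ennreal (indicator {v. A < \<bar>v\<bar>} v * exp (- c * \<bar>v\<bar> powr r)) \<partial>lborel)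
      \<le> (\<integral>\<^sup>+v. g v + g (- v) \<partial>lborel)"
    using A by (intro nn_integral_mono) (auto simp: g_def split: split_indicator)
  also have "\<dots> = (\<integral>\<^sup>+v. g v \<partial>lborel) + (\<integral>\<^sup>+v. g (- v) \<partial>lborel)"
    by (intro nn_integral_add) auto
  also have "(\<integral>\<^sup>+v. g (- v) \<partial>lborel) = (\<integral>\<^sup>+v. g v \<partial>lborel)"
    using nn_integral_real_affine[OF gm, of "-1" 0] by simp
  also have "(\<integral>\<^sup>+v. g v \<partial>lborel) + (\<integral>\<^sup>+v. g v \<partial>lborel) = 2 * (\<integral>\<^sup>+v. g v \<partial>lborel)"
    by (simp add: mult_2)
  also have "\<dots> \<le> 2 * ennreal (Hf c r A / (1 - k * A powr (- r)))"
    unfolding g_def k_def using tail_bound[OF c r A] kq unfolding k_def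
    by (intro mult_left_mono) auto
  also have "\<dots> = ennreal (2 * (Hf c r A / (1 - k * A powr (- r))))"
    using ennreal_mult'[of 2 "Hf c r A / (1 - k * A powr (- r))"] by simp
  finally show ?thesis .
qed

lemma exists_good_A:
  fixes c r :: real
  assumes r: "r > 0"
  shows "\<forall>\<^sub>F A in at_top. A > 0 \<and> k * A powr (- r) < 1"
proof -
  have "((\<lambda>A. k * A powr (- r)) \<longlongrightarrow> 0) at_top" using r by real_asymp
  then have "\<forall>\<^sub>F A in at_top. k * A powr (- r) < 1" by (rule order_tendstoD) simp
  moreover have "\<forall>\<^sub>F A in at_top. (A::real) > 0" by (rule eventually_gt_at_top)
  ultimately show ?thesis by eventually_elim auto
qed

lemma tail_sym_real:
  fixes c r A :: real
  defines "k \<equiv> max 0 (1 - r) / (c * r)"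
  assumes c: "c > 0" and r: "r > 0" and A: "A > 0" and kq: "k * A powr (- r) < 1"
  shows "integrable lborel (\<lambda>v. indicator {v. A < \<bar>v\<bar>} v * exp (- c * \<bar>v\<bar> powr r))"
    and "(\<integral>v. indicator {v. A < \<bar>v\<bar>} v * exp (- c * \<bar>v\<bar> powr r) \<partial>lborel)
     \<le> 2 * (Hf c r A / (1 - k * A powr (- r)))"
proof -
  have b: "(\<integral>\<^sup>+v. ennreal (indicator {v. A < \<bar>v\<bar>} v * exp (- c * \<bar>v\<bar> powr r)) \<partial>lborel)
     \<le> ennreal (2 * (Hf c r A / (1 - k * A powr (- r))))"
    using tail_sym[OF c r A] kq unfolding k_def by simp
  show i: "integrable lborel (\<lambda>v. indicator {v. A < \<bar>v\<bar>} v * exp (- c * \<bar>v\<bar> powr r))"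
    by (rule integrableI_nonneg) (use b in \<open>auto simp: top_unique split: split_indicator intro: le_less_trans\<close>)
  have "ennreal (\<integral>v. indicator {v. A < \<bar>v\<bar>} v * exp (- c * \<bar>v\<bar> powr r) \<partial>lborel)
      = (\<integral>\<^sup>+v. ennreal (indicator {v. A < \<bar>v\<bar>} v * exp (- c * \<bar>v\<bar> powr r)) \<partial>lborel)"
    by (rule nn_integral_eq_integral[OF i, symmetric]) auto
  with b have "ennreal (\<integral>v. indicator {v. A < \<bar>v\<bar>} v * exp (- c * \<bar>v\<bar> powr r) \<partial>lborel)
     \<le> ennreal (2 * (Hf c r A / (1 - k * A powr (- r))))" by simp
  moreover have "0 \<le> 2 * (Hf c r A / (1 - k * A powr (- r)))"
    using A c r kq unfolding Hf_def by (auto intro!: divide_nonneg_nonneg mult_nonneg_nonneg)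
  ultimately show "(\<integral>v. indicator {v. A < \<bar>v\<bar>} v * exp (- c * \<bar>v\<bar> powr r) \<partial>lborel)
     \<le> 2 * (Hf c r A / (1 - k * A powr (- r)))"
    by (simp add: ennreal_le_iff)
qed

lemma integrable_exp_powr:
  fixes c r :: real
  assumes c: "c > 0" and r: "r > 0"
  shows "integrable lborel (\<lambda>v. exp (- c * \<bar>v\<bar> powr r))"
proof -
  define k where "k = max 0 (1 - r) / (c * r)"
  obtain A where A: "A > 0" "k * A powr (- r) < 1"
    using eventually_happens'[OF _ exists_good_A[OF r, of k]] by auto
  have i1: "integrable lborel (\<lambda>v. indicator {v. A < \<bar>v\<bar>} v * exp (- c * \<bar>v\<bar> powr r))"
    using tail_sym_real(1)[OF c r A(1)] A(2) unfolding k_def by simp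
  have i2: "integrable lborel (\<lambda>v. indicator {-A..A} v * exp (- c * \<bar>v\<bar> powr r))"
  proof -
    have ii: "integrable lborel (\<lambda>v. indicator {-A..A} v :: real)"
      using A by (intro integrable_real_indicator) auto
    then show ?thesis by (rule Bochner_Integration.integrable_bound) (use c in \<open>auto split: split_indicator\<close>)
  qed
  have "integrable lborel (\<lambda>v. indicator {v. A < \<bar>v\<bar>} v * exp (- c * \<bar>v\<bar> powr r) + indicator {-A..A} v * exp (- c * \<bar>v\<bar> powr r))"
    using i1 i2 by auto
  moreover have "(\<lambda>v. indicator {v. A < \<bar>v\<bar>} v * exp (- c * \<bar>v\<bar> powr r) + indicator {-A..A} v * exp (- c * \<bar>v\<bar> powr r)) = (\<lambda>v. exp (- c * \<bar>v\<bar> powr r))"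
    by (rule ext) (auto split: split_indicator)
  ultimately show ?thesis by simp
qed

lemma pd_facts:
  assumes "prob_density g"
  shows pd_meas: "g \<in> borel_measurable borel" and pd_nonneg: "\<And>x. 0 \<le> g x"
    and pd_int: "integrable lborel g" and pd_one: "integral\<^sup>L lborel g = 1"
  using assms unfolding prob_density_def by auto

lemma pd_rd:
  assumes "prob_density g"
  shows "real_distribution (density lborel g)"
proof -
  note pd = pd_facts[OF assms]
  have "emeasure (density lborel g) (space (density lborel g)) = (\<integral>\<^sup>+x. g x \<partial>lborel)"
    using pd by (simp add: emeasure_density)
  also have "\<dots> = ennreal (integral\<^sup>L lborel g)"
    using pd by (intro nn_integral_eq_integral) auto
  finally have "prob_space (density lborel g)" using pd by (intro prob_spaceI) simp
  then show ?thesis unfolding real_distribution_def real_distribution_axioms_def by simp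
qed

lemma pd_char:
  assumes "prob_density g"
  shows "char_fun g = char (density lborel g)"
proof
  fix t
  note pd = pd_facts[OF assms]
  have "char (density lborel g) t = (\<integral>x. g x *\<^sub>R iexp (t * x) \<partial>lborel)"
    unfolding char_def using pd by (intro integral_density) auto
  also have "\<dots> = char_fun g t"
    unfolding char_fun_def by (intro Bochner_Integration.integral_cong) (auto simp: scaleR_conv_of_real mult.commute)
  finally show "char_fun g t = char (density lborel g) t" ..
qed

lemma pd_char_facts:
  assumes "prob_density g"
  shows "char_fun g \<in> borel_measurable borel" "\<And>t. isCont (char_fun g) t" "\<And>t. cmod (char_fun g t) \<le> 1"
  using real_distribution.char_measurable[OF pd_rd[OF assms]] real_distribution.isCont_char[OF pd_rd[OF assms]]
    real_distribution.cmod_char_le_1[OF pd_rd[OF assms]] pd_char[OF assms] by auto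

lemma integrable_ind_mult:
  fixes f :: "'a \<Rightarrow> real"
  shows "A \<in> sets M \<Longrightarrow> integrable M f \<Longrightarrow> integrable M (\<lambda>x. indicator A x * f x)"
  using integrable_mult_indicator[of A M f] by (simp add: mult_ac)

lemma sets_abs_gt[measurable]: "{v::real. A < \<bar>v\<bar>} \<in> sets borel"
  by measurable

lemma amgm_pt:
  fixes a w t :: real
  assumes "0 \<le> a" "w > 0" "t > 0"
  shows "a \<le> (t * (a\<^sup>2 * w) + 1 / w / t) / 2"
proof -
  have "0 \<le> (t * a * w - 1)\<^sup>2" by simp
  hence "2 * (t * a * w) \<le> (t * a * w)\<^sup>2 + 1" by (simp add: power2_eq_square algebra_simps)
  hence "2 * (t * a * w) / (t * w) \<le> ((t * a * w)\<^sup>2 + 1) / (t * w)"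
    using assms by (intro divide_right_mono) auto
  moreover have "2 * (t * a * w) / (t * w) = 2 * a" using assms by (simp add: field_simps)
  moreover have "((t * a * w)\<^sup>2 + 1) / (t * w) = t * (a\<^sup>2 * w) + 1 / w / t"
    using assms by (simp add: field_simps power2_eq_square)
  ultimately show ?thesis by simp
qed

lemma amgm_opt:
  fixes X a b :: real
  assumes "a > 0" "b \<ge> 0" and H: "\<And>t. t > 0 \<Longrightarrow> X \<le> (t * a + b / t) / 2"
  shows "X \<le> sqrt (a * b)"
proof (cases "b > 0")
  case True
  define s where "s = sqrt (a * b)"
  have s: "s > 0" "s * s = a * b" using True assms unfolding s_def by (auto simp: real_sqrt_mult_self)
  have "X \<le> ((s / a) * a + b / (s / a)) / 2" using H[of "s / a"] s assms by simp
  also have "(s / a) * a = s" using assms by simp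
  also have "b / (s / a) = s" using s assms by (simp add: field_simps)
  finally show ?thesis unfolding s_def by simp
next
  case False
  hence b0: "b = 0" using assms by simp
  show ?thesis
  proof (rule ccontr)
    assume "\<not> X \<le> sqrt (a * b)"
    hence X: "X > 0" using b0 by simp
    have "X \<le> ((X / a) * a + b / (X / a)) / 2" using H[of "X / a"] X assms by simp
    also have "\<dots> = X / 2" using b0 assms by simp
    finally show False using X by simp
  qed
qed

locale sA =
  fixes \<alpha> r L :: real and f :: "real \<Rightarrow> real"
  assumes alpha: "\<alpha> > 0" and r: "r > 0" and L: "L > 0"
    and fA: "f \<in> class_A \<alpha> r L" and fcont: "continuous_on UNIV f"
begin

definition kk :: real where "kk = max 0 (1 - r) / (2 * \<alpha> * r)"

lemma pdf: "prob_density f" using fA unfolding class_A_def by auto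

lemmas Phi_facts = pd_char_facts[OF pdf]

lemma Phi_meas[measurable]: "char_fun f \<in> borel_measurable borel" by (rule Phi_facts(1))

lemma wL2_nn: "(\<integral>\<^sup>+u. ennreal ((cmod (char_fun f u))\<^sup>2 * exp (2 * \<alpha> * (\<bar>u\<bar> powr r))) \<partial>lborel) \<le> ennreal (2 * pi * L)"
  using fA unfolding class_A_def by auto

lemma wL2_int: "integrable lborel (\<lambda>u. (cmod (char_fun f u))\<^sup>2 * exp (2 * \<alpha> * (\<bar>u\<bar> powr r)))"
  by (rule integrableI_nonneg) (use wL2_nn in \<open>auto simp: top_unique intro: le_less_trans\<close>)

lemma wL2_le: "(\<integral>u. (cmod (char_fun f u))\<^sup>2 * exp (2 * \<alpha> * (\<bar>u\<bar> powr r)) \<partial>lborel) \<le> 2 * pi * L"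
proof -
  have "ennreal (\<integral>u. (cmod (char_fun f u))\<^sup>2 * exp (2 * \<alpha> * (\<bar>u\<bar> powr r)) \<partial>lborel)
     = (\<integral>\<^sup>+u. ennreal ((cmod (char_fun f u))\<^sup>2 * exp (2 * \<alpha> * (\<bar>u\<bar> powr r))) \<partial>lborel)"
    by (rule nn_integral_eq_integral[OF wL2_int, symmetric]) auto
  with wL2_nn have "ennreal (\<integral>u. (cmod (char_fun f u))\<^sup>2 * exp (2 * \<alpha> * (\<bar>u\<bar> powr r)) \<partial>lborel) \<le> ennreal (2 * pi * L)"
    by simp
  then show ?thesis using L by (subst (asm) ennreal_le_iff) auto
qed

lemma invw_int: "integrable lborel (\<lambda>u. exp (- (2 * \<alpha>) * \<bar>u\<bar> powr r))"
  using integrable_exp_powr[of "2 * \<alpha>" r] alpha r by simp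

lemma Phi_pt: "t > 0 \<Longrightarrow> cmod (char_fun f u) \<le>
   (t * ((cmod (char_fun f u))\<^sup>2 * exp (2 * \<alpha> * (\<bar>u\<bar> powr r))) + exp (- (2 * \<alpha>) * \<bar>u\<bar> powr r) / t) / 2"
  using amgm_pt[of "cmod (char_fun f u)" "exp (2 * \<alpha> * (\<bar>u\<bar> powr r))" t]
  by (simp add: exp_minus field_simps)

lemma Phi_int: "integrable lborel (char_fun f)"
proof -
  have "integrable lborel (\<lambda>u. (1 * ((cmod (char_fun f u))\<^sup>2 * exp (2 * \<alpha> * (\<bar>u\<bar> powr r))) + exp (- (2 * \<alpha>) * \<bar>u\<bar> powr r) / 1) / 2)"
    using wL2_int invw_int by auto
  then show ?thesis
    by (rule Bochner_Integration.integrable_bound) (use Phi_pt[of 1] in auto)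
qed

lemma Phi_tail:
  assumes A: "A > 0" and kq: "kk * A powr (- r) < 1"
  shows "(\<integral>v. indicator {v. A < \<bar>v\<bar>} v * cmod (char_fun f v) \<partial>lborel)
      \<le> sqrt (2 * pi * L * (2 * (Hf (2 * \<alpha>) r A / (1 - kk * A powr (- r)))))"
proof (rule amgm_opt)
  show "2 * pi * L > 0" using L by simp
  show "0 \<le> 2 * (Hf (2 * \<alpha>) r A / (1 - kk * A powr (- r)))"
    using A alpha r kq unfolding Hf_def by (auto intro!: divide_nonneg_nonneg mult_nonneg_nonneg)
  fix t :: real assume t: "t > 0"
  have iP: "integrable lborel (\<lambda>v. indicator {v. A < \<bar>v\<bar>} v * ((cmod (char_fun f v))\<^sup>2 * exp (2 * \<alpha> * (\<bar>v\<bar> powr r))))"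
    using wL2_int by (intro integrable_ind_mult) auto
  have iQ: "integrable lborel (\<lambda>v. indicator {v. A < \<bar>v\<bar>} v * exp (- (2 * \<alpha>) * \<bar>v\<bar> powr r))"
    using invw_int by (intro integrable_ind_mult) auto
  have "(\<integral>v. indicator {v. A < \<bar>v\<bar>} v * cmod (char_fun f v) \<partial>lborel)
     \<le> (\<integral>v. (t * (indicator {v. A < \<bar>v\<bar>} v * ((cmod (char_fun f v))\<^sup>2 * exp (2 * \<alpha> * (\<bar>v\<bar> powr r))))
            + (indicator {v. A < \<bar>v\<bar>} v * exp (- (2 * \<alpha>) * \<bar>v\<bar> powr r)) / t) / 2 \<partial>lborel)"
  proof (rule integral_mono)
    show "integrable lborel (\<lambda>v. indicator {v. A < \<bar>v\<bar>} v * cmod (char_fun f v))"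
      using Phi_int by (intro integrable_ind_mult) auto
    show "integrable lborel (\<lambda>v. (t * (indicator {v. A < \<bar>v\<bar>} v * ((cmod (char_fun f v))\<^sup>2 * exp (2 * \<alpha> * (\<bar>v\<bar> powr r))))
            + (indicator {v. A < \<bar>v\<bar>} v * exp (- (2 * \<alpha>) * \<bar>v\<bar> powr r)) / t) / 2)"
      using iP iQ by auto
    fix v show "indicator {v. A < \<bar>v\<bar>} v * cmod (char_fun f v) \<le> (t * (indicator {v. A < \<bar>v\<bar>} v * ((cmod (char_fun f v))\<^sup>2 * exp (2 * \<alpha> * (\<bar>v\<bar> powr r))))
            + (indicator {v. A < \<bar>v\<bar>} v * exp (- (2 * \<alpha>) * \<bar>v\<bar> powr r)) / t) / 2"
      using Phi_pt[OF t, of v] by (auto split: split_indicator)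
  qed
  also have "\<dots> = (t * (\<integral>v. indicator {v. A < \<bar>v\<bar>} v * ((cmod (char_fun f v))\<^sup>2 * exp (2 * \<alpha> * (\<bar>v\<bar> powr r))) \<partial>lborel)
      + (\<integral>v. indicator {v. A < \<bar>v\<bar>} v * exp (- (2 * \<alpha>) * \<bar>v\<bar> powr r) \<partial>lborel) / t) / 2"
    using iP iQ by simp
  also have "\<dots> \<le> (t * (2 * pi * L) + (2 * (Hf (2 * \<alpha>) r A / (1 - kk * A powr (- r)))) / t) / 2"
  proof -
    have "(\<integral>v. indicator {v. A < \<bar>v\<bar>} v * ((cmod (char_fun f v))\<^sup>2 * exp (2 * \<alpha> * (\<bar>v\<bar> powr r))) \<partial>lborel)
       \<le> (\<integral>u. (cmod (char_fun f u))\<^sup>2 * exp (2 * \<alpha> * (\<bar>u\<bar> powr r)) \<partial>lborel)"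
      using iP wL2_int by (intro integral_mono) (auto split: split_indicator)
    also note wL2_le
    finally have P: "(\<integral>v. indicator {v. A < \<bar>v\<bar>} v * ((cmod (char_fun f v))\<^sup>2 * exp (2 * \<alpha> * (\<bar>v\<bar> powr r))) \<partial>lborel) \<le> 2 * pi * L" .
    have Q: "(\<integral>v. indicator {v. A < \<bar>v\<bar>} v * exp (- (2 * \<alpha>) * \<bar>v\<bar> powr r) \<partial>lborel)
      \<le> 2 * (Hf (2 * \<alpha>) r A / (1 - kk * A powr (- r)))"
      using tail_sym_real(2)[of "2 * \<alpha>" r A] alpha r A kq unfolding kk_def by simp
    show ?thesis using P Q t
      by (intro divide_right_mono add_mono mult_left_mono divide_right_mono) auto
  qed
  finally show "(\<integral>v. indicator {v. A < \<bar>v\<bar>} v * cmod (char_fun f v) \<partial>lborel)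
     \<le> (t * (2 * pi * L) + 2 * (Hf (2 * \<alpha>) r A / (1 - kk * A powr (- r))) / t) / 2" .
qed

end

lemma integrable_prod_real:
  fixes f g :: "real \<Rightarrow> real"
  assumes f: "integrable lborel f" and g: "integrable lborel g"
  shows "integrable (lborel \<Otimes>\<^sub>M lborel) (\<lambda>(x,y). f x * g y)"
proof (rule lborel_pair.Fubini_integrable)
  have [measurable]: "f \<in> borel_measurable borel" "g \<in> borel_measurable borel"
    using f g by (auto dest: borel_measurable_integrable)
  show "(\<lambda>(x,y). f x * g y) \<in> borel_measurable (lborel \<Otimes>\<^sub>M lborel)" by measurable
  have "(\<lambda>x. \<integral>y. norm (case (x, y) of (x, y) \<Rightarrow> f x * g y) \<partial>lborel) = (\<lambda>x. \<bar>f x\<bar> * (\<integral>y. \<bar>g y\<bar> \<partial>lborel))"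
    by (auto simp: abs_mult)
  moreover have "integrable lborel (\<lambda>x. \<bar>f x\<bar> * (\<integral>y. \<bar>g y\<bar> \<partial>lborel))"
    using f by (intro integrable_mult_left) auto
  ultimately show "integrable lborel (\<lambda>x. \<integral>y. norm (case (x, y) of (x, y) \<Rightarrow> f x * g y) \<partial>lborel)" by simp
  show "AE x in lborel. integrable lborel (\<lambda>y. case (x, y) of (x, y) \<Rightarrow> f x * g y)"
    using g by auto
qed

definition phi :: "real \<Rightarrow> real \<Rightarrow> real" where
  "phi \<sigma> x = exp (- (x / \<sigma>)\<^sup>2 / 2)"

definition gk :: "real \<Rightarrow> real \<Rightarrow> real" where
  "gk \<sigma> w = \<sigma> * sqrt (2 * pi) * exp (- (\<sigma> * w)\<^sup>2 / 2)"

lemma phi_eq: "\<sigma> > 0 \<Longrightarrow> phi \<sigma> x = \<sigma> * sqrt (2 * pi) * normal_density 0 \<sigma> x"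
  unfolding phi_def normal_density_def
  by (simp add: real_sqrt_mult power_divide field_simps)

lemma gk_eq:
  assumes s: "\<sigma> > 0" shows "gk \<sigma> w = 2 * pi * normal_density 0 (1 / \<sigma>) w"
proof -
  have e1: "sqrt (2 * pi * (1/\<sigma>)\<^sup>2) = sqrt (2 * pi) / \<sigma>"
    using s by (simp add: real_sqrt_mult real_sqrt_divide power_divide)
  have e2: "- (w - 0)\<^sup>2 / (2 * (1/\<sigma>)\<^sup>2) = - (\<sigma> * w)\<^sup>2 / 2"
    using s by (simp add: power_divide field_simps power_mult_distrib)
  have e3: "sqrt (2 * pi) * sqrt (2 * pi) = 2 * pi" by simp
  have "2 * pi * normal_density 0 (1 / \<sigma>) w = 2 * pi / (sqrt (2 * pi) / \<sigma>) * exp (- (\<sigma> * w)\<^sup>2 / 2)"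
    unfolding normal_density_def e1 e2 by simp
  also have "2 * pi / (sqrt (2 * pi) / \<sigma>) = \<sigma> * sqrt (2 * pi)"
    using s e3 by (simp add: field_simps)
  finally show ?thesis unfolding gk_def by simp
qed

lemma phi_fun: "\<sigma> > 0 \<Longrightarrow> phi \<sigma> = (\<lambda>x. (\<sigma> * sqrt (2 * pi)) * normal_density 0 \<sigma> x)"
  by (rule ext) (simp add: phi_eq)
lemma gk_fun: "\<sigma> > 0 \<Longrightarrow> gk \<sigma> = (\<lambda>x. (2 * pi) * normal_density 0 (1 / \<sigma>) x)"
  by (rule ext) (simp add: gk_eq)

lemma phi_int: "\<sigma> > 0 \<Longrightarrow> integrable lborel (phi \<sigma>)"
  by (simp add: phi_fun)

lemma gk_int: "\<sigma> > 0 \<Longrightarrow> integrable lborel (gk \<sigma>)"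
  by (simp add: gk_fun)

lemma gk_integral: "\<sigma> > 0 \<Longrightarrow> (\<integral>w. gk \<sigma> w \<partial>lborel) = 2 * pi"
  by (simp add: gk_fun)

lemma phi_meas[measurable]: "phi \<sigma> \<in> borel_measurable borel" unfolding phi_def by measurable
lemma gk_meas[measurable]: "gk \<sigma> \<in> borel_measurable borel" unfolding gk_def by measurable

lemma phi_nonneg: "0 \<le> phi \<sigma> x" and phi_le1: "phi \<sigma> x \<le> 1"
  unfolding phi_def by auto

lemma gk_nonneg: "\<sigma> > 0 \<Longrightarrow> 0 \<le> gk \<sigma> w" and gk_le: "\<sigma> > 0 \<Longrightarrow> gk \<sigma> w \<le> \<sigma> * sqrt (2 * pi)"
  unfolding gk_def by auto

lemma gauss_ft:
  assumes s: "\<sigma> > 0"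
  shows "(\<integral>x. iexp (- (w * x)) * complex_of_real (phi \<sigma> x) \<partial>lborel) = complex_of_real (gk \<sigma> w)"
proof -
  have "(\<integral>x. iexp (- (w * x)) * complex_of_real (phi \<sigma> x) \<partial>lborel)
      = \<bar>\<sigma>\<bar> *\<^sub>R (\<integral>y. iexp (- (w * (0 + \<sigma> * y))) * complex_of_real (phi \<sigma> (0 + \<sigma> * y)) \<partial>lborel)"
    using s by (intro lborel_integral_real_affine) simp
  also have "(\<lambda>y. iexp (- (w * (0 + \<sigma> * y))) * complex_of_real (phi \<sigma> (0 + \<sigma> * y)))
     = (\<lambda>y. sqrt (2 * pi) *\<^sub>R (std_normal_density y *\<^sub>R iexp (- (w * \<sigma>) * y)))"
    using s by (auto simp: phi_def std_normal_density_def scaleR_conv_of_real fun_eq_iff mult_ac)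
  also have "(\<integral>y. sqrt (2 * pi) *\<^sub>R (std_normal_density y *\<^sub>R iexp (- (w * \<sigma>) * y)) \<partial>lborel)
     = sqrt (2 * pi) *\<^sub>R char std_normal_distribution (- (w * \<sigma>))"
    unfolding char_def integral_scaleR_right by (subst integral_density) auto
  also have "char std_normal_distribution (- (w * \<sigma>)) = complex_of_real (exp (- (w * \<sigma>)\<^sup>2 / 2))"
    by (simp add: char_std_normal_distribution)
  finally show ?thesis using s unfolding gk_def by (simp add: scaleR_conv_of_real mult_ac power_mult_distrib)
qed

lemma nn_gk_shift:
  assumes s: "\<sigma> > 0"
  shows "(\<integral>\<^sup>+v. ennreal (gk \<sigma> (u - v)) \<partial>lborel) = ennreal (2 * pi)"
    and "(\<integral>\<^sup>+v. ennreal (gk \<sigma> (v - u)) \<partial>lborel) = ennreal (2 * pi)"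
proof -
  have base: "(\<integral>\<^sup>+v. ennreal (gk \<sigma> v) \<partial>lborel) = ennreal (2 * pi)"
    using s by (subst nn_integral_eq_integral) (auto simp: gk_int gk_integral gk_nonneg)
  have m: "(\<lambda>v. ennreal (gk \<sigma> v)) \<in> borel_measurable borel" by measurable
  show "(\<integral>\<^sup>+v. ennreal (gk \<sigma> (u - v)) \<partial>lborel) = ennreal (2 * pi)"
    using nn_integral_real_affine[OF m, of "-1" u] base by simp
  show "(\<integral>\<^sup>+v. ennreal (gk \<sigma> (v - u)) \<partial>lborel) = ennreal (2 * pi)"
    using nn_integral_real_affine[OF m, of 1 "-u"] base by simp
qed

lemma schur:
  fixes a :: "real \<Rightarrow> real"
  assumes am[measurable]: "a \<in> borel_measurable borel" and a0: "\<And>u. 0 \<le> a u" and s: "\<sigma> > 0"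
  shows "(\<integral>\<^sup>+u. \<integral>\<^sup>+v. ennreal (a u * (a v * gk \<sigma> (u - v))) \<partial>lborel \<partial>lborel)
     \<le> ennreal (2 * pi) * (\<integral>\<^sup>+u. ennreal ((a u)\<^sup>2) \<partial>lborel)"
proof -
  have pt: "a u * (a v * gk \<sigma> (u - v)) \<le> (a u)\<^sup>2 / 2 * gk \<sigma> (u - v) + (a v)\<^sup>2 / 2 * gk \<sigma> (u - v)" for u v
  proof -
    have "0 \<le> (a u - a v)\<^sup>2 * gk \<sigma> (u - v)" using gk_nonneg[OF s] by simp
    then show ?thesis by (simp add: power2_eq_square algebra_simps)
  qed
  have "(\<integral>\<^sup>+u. \<integral>\<^sup>+v. ennreal (a u * (a v * gk \<sigma> (u - v))) \<partial>lborel \<partial>lborel)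
     \<le> (\<integral>\<^sup>+u. \<integral>\<^sup>+v. ennreal ((a u)\<^sup>2 / 2 * gk \<sigma> (u - v)) + ennreal ((a v)\<^sup>2 / 2 * gk \<sigma> (u - v)) \<partial>lborel \<partial>lborel)"
  proof (intro nn_integral_mono)
    fix u v
    have "ennreal ((a u)\<^sup>2 / 2 * gk \<sigma> (u - v)) + ennreal ((a v)\<^sup>2 / 2 * gk \<sigma> (u - v))
       = ennreal ((a u)\<^sup>2 / 2 * gk \<sigma> (u - v) + (a v)\<^sup>2 / 2 * gk \<sigma> (u - v))"
      using gk_nonneg[OF s, of "u - v"] by (subst ennreal_plus) auto
    then show "ennreal (a u * (a v * gk \<sigma> (u - v))) \<le> ennreal ((a u)\<^sup>2 / 2 * gk \<sigma> (u - v)) + ennreal ((a v)\<^sup>2 / 2 * gk \<sigma> (u - v))"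
      using pt[of u v] by (simp add: ennreal_leI)
  qed
  also have "\<dots> = (\<integral>\<^sup>+u. (\<integral>\<^sup>+v. ennreal ((a u)\<^sup>2 / 2 * gk \<sigma> (u - v)) \<partial>lborel) + (\<integral>\<^sup>+v. ennreal ((a v)\<^sup>2 / 2 * gk \<sigma> (u - v)) \<partial>lborel) \<partial>lborel)"
    by (intro nn_integral_cong nn_integral_add) auto
  also have "\<dots> = (\<integral>\<^sup>+u. (\<integral>\<^sup>+v. ennreal ((a u)\<^sup>2 / 2 * gk \<sigma> (u - v)) \<partial>lborel) \<partial>lborel)
       + (\<integral>\<^sup>+u. (\<integral>\<^sup>+v. ennreal ((a v)\<^sup>2 / 2 * gk \<sigma> (u - v)) \<partial>lborel) \<partial>lborel)"
    by (intro nn_integral_add) (auto intro!: lborel.borel_measurable_nn_integral)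
  also have "(\<integral>\<^sup>+u. (\<integral>\<^sup>+v. ennreal ((a v)\<^sup>2 / 2 * gk \<sigma> (u - v)) \<partial>lborel) \<partial>lborel)
      = (\<integral>\<^sup>+v. (\<integral>\<^sup>+u. ennreal ((a v)\<^sup>2 / 2 * gk \<sigma> (u - v)) \<partial>lborel) \<partial>lborel)"
    by (rule lborel_pair.Fubini') measurable
  also have "\<dots> = (\<integral>\<^sup>+v. ennreal (pi * (a v)\<^sup>2) \<partial>lborel)"
  proof (intro nn_integral_cong)
    fix v
    have "(\<integral>\<^sup>+u. ennreal ((a v)\<^sup>2 / 2 * gk \<sigma> (u - v)) \<partial>lborel) = ennreal ((a v)\<^sup>2 / 2) * (\<integral>\<^sup>+u. ennreal (gk \<sigma> (u - v)) \<partial>lborel)"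
    proof -
      have "(\<integral>\<^sup>+u. ennreal ((a v)\<^sup>2 / 2 * gk \<sigma> (u - v)) \<partial>lborel) = (\<integral>\<^sup>+u. ennreal ((a v)\<^sup>2 / 2) * ennreal (gk \<sigma> (u - v)) \<partial>lborel)"
        by (intro nn_integral_cong, subst ennreal_mult[symmetric]) (auto simp: gk_nonneg[OF s])
      then show ?thesis by (simp add: nn_integral_cmult)
    qed
    also have "\<dots> = ennreal (pi * (a v)\<^sup>2)"
      using nn_gk_shift(2)[OF s, of v] by (simp add: ennreal_mult[symmetric])
    finally show "(\<integral>\<^sup>+u. ennreal ((a v)\<^sup>2 / 2 * gk \<sigma> (u - v)) \<partial>lborel) = ennreal (pi * (a v)\<^sup>2)" .
  qed
  also have "(\<integral>\<^sup>+u. (\<integral>\<^sup>+v. ennreal ((a u)\<^sup>2 / 2 * gk \<sigma> (u - v)) \<partial>lborel) \<partial>lborel) = (\<integral>\<^sup>+v. ennreal (pi * (a v)\<^sup>2) \<partial>lborel)"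
  proof (intro nn_integral_cong)
    fix u
    have "(\<integral>\<^sup>+v. ennreal ((a u)\<^sup>2 / 2 * gk \<sigma> (u - v)) \<partial>lborel) = ennreal ((a u)\<^sup>2 / 2) * (\<integral>\<^sup>+v. ennreal (gk \<sigma> (u - v)) \<partial>lborel)"
    proof -
      have "(\<integral>\<^sup>+v. ennreal ((a u)\<^sup>2 / 2 * gk \<sigma> (u - v)) \<partial>lborel) = (\<integral>\<^sup>+v. ennreal ((a u)\<^sup>2 / 2) * ennreal (gk \<sigma> (u - v)) \<partial>lborel)"
        by (intro nn_integral_cong, subst ennreal_mult[symmetric]) (auto simp: gk_nonneg[OF s])
      then show ?thesis by (simp add: nn_integral_cmult)
    qed
    also have "\<dots> = ennreal (pi * (a u)\<^sup>2)"
      using nn_gk_shift(1)[OF s, of u] by (simp add: ennreal_mult[symmetric])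
    finally show "(\<integral>\<^sup>+v. ennreal ((a u)\<^sup>2 / 2 * gk \<sigma> (u - v)) \<partial>lborel) = ennreal (pi * (a u)\<^sup>2)" .
  qed
  also have "(\<integral>\<^sup>+v. ennreal (pi * (a v)\<^sup>2) \<partial>lborel) = ennreal pi * (\<integral>\<^sup>+u. ennreal ((a u)\<^sup>2) \<partial>lborel)"
    by (subst nn_integral_cmult[symmetric]) (auto simp: ennreal_mult)
  also have "ennreal pi * (\<integral>\<^sup>+u. ennreal ((a u)\<^sup>2) \<partial>lborel) + ennreal pi * (\<integral>\<^sup>+u. ennreal ((a u)\<^sup>2) \<partial>lborel)
     = ennreal (2 * pi) * (\<integral>\<^sup>+u. ennreal ((a u)\<^sup>2) \<partial>lborel)"
    by (simp add: distrib_right[symmetric] ennreal_plus[symmetric] del: ennreal_plus)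
  finally show ?thesis .
qed

lemma cnj_iexp: "cnj (iexp t) = iexp (- t)"
  by (simp add: exp_cnj)

lemma borel_measurable_cnj'[measurable]: "(cnj :: complex \<Rightarrow> complex) \<in> borel_measurable borel"
  by (rule borel_measurable_continuous_onI[OF linear_continuous_on[OF bounded_linear_cnj]])

lemma iexp_mult: "iexp a * iexp b = iexp (a + b)"
  by (simp add: exp_add[symmetric] algebra_simps)

lemma ft_meas:
  fixes \<psi> :: "real \<Rightarrow> complex"
  assumes [measurable]: "\<psi> \<in> borel_measurable borel"
  shows "(\<lambda>x. \<integral>v. iexp (- (v * x)) * \<psi> v \<partial>lborel) \<in> borel_measurable borel"
proof -
  have "(\<lambda>x. \<integral>v. iexp (- (v * x)) * \<psi> v \<partial>lborel) \<in> borel_measurable lborel"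
    by (rule sigma_finite_measure.borel_measurable_lebesgue_integral[OF lborel.sigma_finite_measure_axioms]) measurable
  then show ?thesis by simp
qed

lemma ft_bound:
  fixes \<psi> :: "real \<Rightarrow> complex"
  shows "cmod (\<integral>v. iexp (- (v * x)) * \<psi> v \<partial>lborel) \<le> (\<integral>v. cmod (\<psi> v) \<partial>lborel)"
proof -
  have "cmod (\<integral>v. iexp (- (v * x)) * \<psi> v \<partial>lborel) \<le> (\<integral>v. cmod (iexp (- (v * x)) * \<psi> v) \<partial>lborel)"
    by (rule integral_norm_bound)
  also have "\<dots> = (\<integral>v. cmod (\<psi> v) \<partial>lborel)"
    by (simp add: norm_mult)
  finally show ?thesis .
qed

lemma plancherel_sigma:
  fixes \<psi> :: "real \<Rightarrow> complex"
  assumes pm[measurable]: "\<psi> \<in> borel_measurable borel" and pi: "integrable lborel \<psi>" and s: "\<sigma> > 0"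
  defines "D \<equiv> \<lambda>x. \<integral>v. iexp (- (v * x)) * \<psi> v \<partial>lborel"
  shows "(\<integral>\<^sup>+x. ennreal ((cmod (D x))\<^sup>2 * phi \<sigma> x) \<partial>lborel)
     \<le> (\<integral>\<^sup>+u. \<integral>\<^sup>+v. ennreal (cmod (\<psi> u) * (cmod (\<psi> v) * gk \<sigma> (u - v))) \<partial>lborel \<partial>lborel)"
proof -
  define N where "N = (\<integral>v. cmod (\<psi> v) \<partial>lborel)"
  have Dm[measurable]: "D \<in> borel_measurable borel" unfolding D_def by (rule ft_meas) simp
  have Db: "cmod (D x) \<le> N" for x unfolding D_def N_def by (rule ft_bound)
  have N0: "0 \<le> N" unfolding N_def by simp
  define K where "K x u = cnj (D x) * (iexp (- (u * x)) * \<psi> u) * complex_of_real (phi \<sigma> x)" for x u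
  have I1: "integrable (lborel \<Otimes>\<^sub>M lborel) (\<lambda>(x,u). K x u)"
  proof (rule Bochner_Integration.integrable_bound)
    show "integrable (lborel \<Otimes>\<^sub>M lborel) (\<lambda>(x,u). (N * phi \<sigma> x) * cmod (\<psi> u))"
      using pi phi_int[OF s] by (intro integrable_prod_real) auto
    show "(\<lambda>(x,u). K x u) \<in> borel_measurable (lborel \<Otimes>\<^sub>M lborel)" unfolding K_def by measurable
    show "AE xu in lborel \<Otimes>\<^sub>M lborel. norm (case xu of (x,u) \<Rightarrow> K x u) \<le> norm (case xu of (x,u) \<Rightarrow> (N * phi \<sigma> x) * cmod (\<psi> u))"
    proof -
      have Kb: "cmod (K x u) \<le> N * phi \<sigma> x * cmod (\<psi> u)" for x u
      proof -
        have "cmod (K x u) = cmod (D x) * (phi \<sigma> x * cmod (\<psi> u))"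
          by (simp add: K_def norm_mult norm_exp_eq_Re abs_of_nonneg phi_nonneg mult_ac)
        also have "\<dots> \<le> N * (phi \<sigma> x * cmod (\<psi> u))"
          by (intro mult_right_mono Db) (simp add: phi_nonneg)
        finally show ?thesis by (simp add: mult_ac)
      qed
      show ?thesis by (intro AE_I2) (auto split: prod.splits intro: order.trans[OF Kb abs_ge_self])
    qed
  qed
  have E1: "complex_of_real ((cmod (D x))\<^sup>2 * phi \<sigma> x) = (\<integral>u. K x u \<partial>lborel)" for x
  proof -
    have "complex_of_real ((cmod (D x))\<^sup>2 * phi \<sigma> x) = complex_of_real ((cmod (D x))\<^sup>2) * complex_of_real (phi \<sigma> x)"
      by (rule of_real_mult)
    also have "\<dots> = cnj (D x) * D x * complex_of_real (phi \<sigma> x)"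
      unfolding complex_norm_square by (simp add: mult_ac)
    also have "\<dots> = (\<integral>u. K x u \<partial>lborel)"
      unfolding K_def D_def by (simp add: integral_mult_right_zero integral_mult_left_zero)
    finally show ?thesis .
  qed
  have intD: "integrable lborel (\<lambda>x. (cmod (D x))\<^sup>2 * phi \<sigma> x)"
  proof (rule Bochner_Integration.integrable_bound)
    show "integrable lborel (\<lambda>x. N\<^sup>2 * phi \<sigma> x)" using phi_int[OF s] by simp
    show "AE x in lborel. norm ((cmod (D x))\<^sup>2 * phi \<sigma> x) \<le> norm (N\<^sup>2 * phi \<sigma> x)"
      using Db phi_nonneg[of \<sigma>] by (auto simp: abs_mult intro!: mult_right_mono power_mono)
  qed simp
  define J where "J u = \<psi> u * (\<integral>v. cnj (\<psi> v) * complex_of_real (gk \<sigma> (u - v)) \<partial>lborel)" for u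
  have E2: "(\<integral>x. K x u \<partial>lborel) = J u" for u
  proof -
    define K2 where "K2 x v = cnj (\<psi> v) * (iexp (- ((u - v) * x)) * complex_of_real (phi \<sigma> x))" for x v
    have I2: "integrable (lborel \<Otimes>\<^sub>M lborel) (\<lambda>(x,v). K2 x v)"
    proof (rule Bochner_Integration.integrable_bound)
      show "integrable (lborel \<Otimes>\<^sub>M lborel) (\<lambda>(x,v). phi \<sigma> x * cmod (\<psi> v))"
        using pi phi_int[OF s] by (intro integrable_prod_real) auto
      show "(\<lambda>(x,v). K2 x v) \<in> borel_measurable (lborel \<Otimes>\<^sub>M lborel)" unfolding K2_def by measurable
      show "AE xv in lborel \<Otimes>\<^sub>M lborel. norm (case xv of (x,v) \<Rightarrow> K2 x v) \<le> norm (case xv of (x,v) \<Rightarrow> phi \<sigma> x * cmod (\<psi> v))"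
        using phi_nonneg[of \<sigma>] by (intro AE_I2) (auto simp: K2_def norm_mult abs_mult norm_exp_eq_Re split: prod.splits)
    qed
    have cD: "cnj (D x) = (\<integral>v. iexp (v * x) * cnj (\<psi> v) \<partial>lborel)" for x
      unfolding D_def Bochner_Integration.integral_cnj[symmetric] by (simp add: exp_cnj)
    have "K x u = \<psi> u * (\<integral>v. K2 x v \<partial>lborel)" for x
    proof -
      have "K x u = \<psi> u * (cnj (D x) * iexp (- (u * x)) * complex_of_real (phi \<sigma> x))"
        unfolding K_def by (simp add: mult_ac)
      also have "cnj (D x) * iexp (- (u * x)) * complex_of_real (phi \<sigma> x) = (\<integral>v. K2 x v \<partial>lborel)"
        unfolding cD K2_def integral_mult_left_zero[symmetric]
        by (intro Bochner_Integration.integral_cong refl) (simp add: exp_add[symmetric] algebra_simps)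
      finally show ?thesis .
    qed
    then have "(\<integral>x. K x u \<partial>lborel) = \<psi> u * (\<integral>x. \<integral>v. K2 x v \<partial>lborel \<partial>lborel)"
      by (simp add: integral_mult_right_zero)
    also have "(\<integral>x. \<integral>v. K2 x v \<partial>lborel \<partial>lborel) = (\<integral>v. \<integral>x. K2 x v \<partial>lborel \<partial>lborel)"
      using lborel_pair.Fubini_integral[OF I2] by simp
    also have "\<dots> = (\<integral>v. cnj (\<psi> v) * complex_of_real (gk \<sigma> (u - v)) \<partial>lborel)"
      unfolding K2_def integral_mult_right_zero gauss_ft[OF s] ..
    finally show ?thesis unfolding J_def .
  qed
  have intJ: "integrable lborel J"
  proof -
    have "integrable lborel (\<lambda>u. \<integral>x. K x u \<partial>lborel)"
      using lborel_pair.integrable_snd[of K] I1 by simp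
    then show ?thesis using E2 by simp
  qed
  have "complex_of_real (\<integral>x. (cmod (D x))\<^sup>2 * phi \<sigma> x \<partial>lborel) = (\<integral>x. \<integral>u. K x u \<partial>lborel \<partial>lborel)"
    unfolding integral_complex_of_real[symmetric] E1 ..
  also have "\<dots> = (\<integral>u. \<integral>x. K x u \<partial>lborel \<partial>lborel)"
    using lborel_pair.Fubini_integral[OF I1] by simp
  also have "\<dots> = (\<integral>u. J u \<partial>lborel)" unfolding E2 ..
  finally have eq: "complex_of_real (\<integral>x. (cmod (D x))\<^sup>2 * phi \<sigma> x \<partial>lborel) = (\<integral>u. J u \<partial>lborel)" .
  have "(\<integral>\<^sup>+x. ennreal ((cmod (D x))\<^sup>2 * phi \<sigma> x) \<partial>lborel) = ennreal (\<integral>x. (cmod (D x))\<^sup>2 * phi \<sigma> x \<partial>lborel)"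
    using intD phi_nonneg[of \<sigma>] by (intro nn_integral_eq_integral) auto
  also have "\<dots> = ennreal (cmod (\<integral>u. J u \<partial>lborel))"
  proof -
    have "0 \<le> (\<integral>x. (cmod (D x))\<^sup>2 * phi \<sigma> x \<partial>lborel)"
      using phi_nonneg[of \<sigma>] by (intro integral_nonneg_AE) auto
    then show ?thesis unfolding eq[symmetric] by simp
  qed
  also have "\<dots> \<le> (\<integral>\<^sup>+u. ennreal (cmod (J u)) \<partial>lborel)"
    by (rule integral_norm_bound_ennreal[OF intJ])
  also have "\<dots> \<le> (\<integral>\<^sup>+u. \<integral>\<^sup>+v. ennreal (cmod (\<psi> u) * (cmod (\<psi> v) * gk \<sigma> (u - v))) \<partial>lborel \<partial>lborel)"
  proof (intro nn_integral_mono)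
    fix u
    have iv: "integrable lborel (\<lambda>v. cnj (\<psi> v) * complex_of_real (gk \<sigma> (u - v)))"
    proof (rule Bochner_Integration.integrable_bound)
      show "integrable lborel (\<lambda>v. (\<sigma> * sqrt (2 * pi)) * cmod (\<psi> v))" using pi by auto
      show "AE v in lborel. norm (cnj (\<psi> v) * complex_of_real (gk \<sigma> (u - v))) \<le> norm ((\<sigma> * sqrt (2 * pi)) * cmod (\<psi> v))"
        using gk_nonneg[OF s] gk_le[OF s] s by (auto simp: norm_mult abs_mult mult.commute intro!: mult_left_mono)
    qed simp
    have "ennreal (cmod (J u)) = ennreal (cmod (\<psi> u)) * ennreal (cmod (\<integral>v. cnj (\<psi> v) * complex_of_real (gk \<sigma> (u - v)) \<partial>lborel))"
      unfolding J_def by (simp add: norm_mult ennreal_mult)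
    also have "\<dots> \<le> ennreal (cmod (\<psi> u)) * (\<integral>\<^sup>+v. ennreal (cmod (cnj (\<psi> v) * complex_of_real (gk \<sigma> (u - v)))) \<partial>lborel)"
      by (intro mult_left_mono integral_norm_bound_ennreal[OF iv]) auto
    also have "\<dots> = (\<integral>\<^sup>+v. ennreal (cmod (\<psi> u)) * ennreal (cmod (cnj (\<psi> v) * complex_of_real (gk \<sigma> (u - v)))) \<partial>lborel)"
      by (rule nn_integral_cmult[symmetric]) measurable
    also have "\<dots> = (\<integral>\<^sup>+v. ennreal (cmod (\<psi> u) * (cmod (\<psi> v) * gk \<sigma> (u - v))) \<partial>lborel)"
      using gk_nonneg[OF s] by (intro nn_integral_cong) (simp add: norm_mult ennreal_mult)
    finally show "ennreal (cmod (J u)) \<le> (\<integral>\<^sup>+v. ennreal (cmod (\<psi> u) * (cmod (\<psi> v) * gk \<sigma> (u - v))) \<partial>lborel)" .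
  qed
  finally show ?thesis .
qed

lemma phi_lim: "(\<lambda>n. phi (real (Suc n)) x) \<longlonglongrightarrow> 1"
proof -
  have "filterlim (\<lambda>n. real n + 1) at_top sequentially" by real_asymp
  then have t: "(\<lambda>n. x / (real n + 1)) \<longlonglongrightarrow> 0"
    by (intro tendsto_divide_0[OF tendsto_const] filterlim_at_top_imp_at_infinity)
  have "(\<lambda>n. exp (- (x / (real n + 1))\<^sup>2 / 2)) \<longlonglongrightarrow> exp (- 0\<^sup>2 / 2)"
    by (intro tendsto_intros t) simp
  then have "(\<lambda>n. exp (- (x / (real n + 1))\<^sup>2 / 2)) \<longlonglongrightarrow> 1" by simp
  then show ?thesis unfolding phi_def by (simp add: add.commute)
qed

lemma plancherel:
  fixes \<psi> :: "real \<Rightarrow> complex"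
  assumes pm[measurable]: "\<psi> \<in> borel_measurable borel" and pi: "integrable lborel \<psi>"
  shows "(\<integral>\<^sup>+x. ennreal ((cmod (\<integral>v. iexp (- (v * x)) * \<psi> v \<partial>lborel))\<^sup>2) \<partial>lborel)
     \<le> ennreal (2 * pi) * (\<integral>\<^sup>+u. ennreal ((cmod (\<psi> u))\<^sup>2) \<partial>lborel)"
proof -
  define D where "D x = (\<integral>v. iexp (- (v * x)) * \<psi> v \<partial>lborel)" for x
  have Dm[measurable]: "D \<in> borel_measurable borel" unfolding D_def[abs_def] by (rule ft_meas) simp
  define B where "B = ennreal (2 * pi) * (\<integral>\<^sup>+u. ennreal ((cmod (\<psi> u))\<^sup>2) \<partial>lborel)"
  have bnd: "(\<integral>\<^sup>+x. ennreal ((cmod (D x))\<^sup>2 * phi (real (Suc n)) x) \<partial>lborel) \<le> B" for n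
  proof -
    have s: "real (Suc n) > 0" by simp
    have "(\<integral>\<^sup>+x. ennreal ((cmod (D x))\<^sup>2 * phi (real (Suc n)) x) \<partial>lborel)
      \<le> (\<integral>\<^sup>+u. \<integral>\<^sup>+v. ennreal (cmod (\<psi> u) * (cmod (\<psi> v) * gk (real (Suc n)) (u - v))) \<partial>lborel \<partial>lborel)"
      unfolding D_def by (rule plancherel_sigma[OF pm pi s])
    also have "\<dots> \<le> B" unfolding B_def
      by (rule schur[of "\<lambda>u. cmod (\<psi> u)", OF _ _ s]) auto
    finally show ?thesis .
  qed
  have "(\<integral>\<^sup>+x. ennreal ((cmod (D x))\<^sup>2) \<partial>lborel)
      = (\<integral>\<^sup>+x. liminf (\<lambda>n. ennreal ((cmod (D x))\<^sup>2 * phi (real (Suc n)) x)) \<partial>lborel)"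
  proof (intro nn_integral_cong)
    fix x
    have "(\<lambda>n. ennreal ((cmod (D x))\<^sup>2 * phi (real (Suc n)) x)) \<longlonglongrightarrow> ennreal ((cmod (D x))\<^sup>2 * 1)"
      by (intro tendsto_ennrealI tendsto_mult tendsto_const phi_lim)
    then show "ennreal ((cmod (D x))\<^sup>2) = liminf (\<lambda>n. ennreal ((cmod (D x))\<^sup>2 * phi (real (Suc n)) x))"
      by (simp add: lim_imp_Liminf)
  qed
  also have "\<dots> \<le> liminf (\<lambda>n. \<integral>\<^sup>+x. ennreal ((cmod (D x))\<^sup>2 * phi (real (Suc n)) x) \<partial>lborel)"
    by (rule nn_integral_liminf) measurable
  also have "\<dots> \<le> limsup (\<lambda>n. \<integral>\<^sup>+x. ennreal ((cmod (D x))\<^sup>2 * phi (real (Suc n)) x) \<partial>lborel)"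
    by (rule Liminf_le_Limsup) simp
  also have "\<dots> \<le> B"
    by (rule Limsup_bounded) (use bnd in auto)
  finally show ?thesis unfolding B_def D_def .
qed

lemma div_swap_c: "(A - B) / C = (B - A) / (- C :: complex)"
  by (metis divide_minus_right minus_diff_eq minus_divide_left)

lemma ii_c: "\<And>E::complex. - (\<i> * (E * \<i>)) = E"
  by (metis complex_i_mult_minus minus_minus mult.commute)

lemma iexp_lin_deriv:
  assumes t: "t \<noteq> 0"
  shows "((\<lambda>x. \<i> * iexp (- (t * x)) / complex_of_real t) has_vector_derivative iexp (- (t * x))) (at x within S)"
proof -
  have "((\<lambda>z. \<i> * exp (\<i> * (- complex_of_real t * z)) / complex_of_real t) has_field_derivative
        (\<i> * (exp (\<i> * (- complex_of_real t * complex_of_real x)) * (\<i> * (- complex_of_real t))) / complex_of_real t)) (at (complex_of_real x))"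
    by (auto intro!: derivative_eq_intros simp: ii_c)
  from has_vector_derivative_real_field[OF this]
  have "((\<lambda>y. \<i> * exp (\<i> * (- complex_of_real t * complex_of_real y)) / complex_of_real t) has_vector_derivative
        (\<i> * (exp (\<i> * (- complex_of_real t * complex_of_real x)) * (\<i> * (- complex_of_real t))) / complex_of_real t)) (at x within S)" by simp
  moreover have "(\<i> * (exp (\<i> * (- complex_of_real t * complex_of_real x)) * (\<i> * (- complex_of_real t))) / complex_of_real t) = iexp (- (t * x))"
  proof -
    have ii: "\<And>E::complex. - (\<i> * (E * \<i>)) = E"
      by (metis complex_i_mult_minus minus_minus mult.commute)
    show ?thesis using t by (simp add: field_simps ii)
  qed
  ultimately show ?thesis by simp
qed

lemma K_eq:
  fixes a b t :: real
  assumes ab: "a \<le> b" and t: "t \<noteq> 0"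
  shows "(iexp (- (t * a)) - iexp (- (t * b))) / (\<i> * complex_of_real t)
     = (\<integral>x. indicator {a..b} x *\<^sub>R iexp (- (t * x)) \<partial>lborel)"
proof -
  have "(\<integral>x. indicator {a..b} x *\<^sub>R iexp (- (t * x)) \<partial>lborel) = (CLBINT x=a..b. iexp (- (t * x)))"
    using ab by (simp add: interval_integral_Icc set_lebesgue_integral_def)
  also have "\<dots> = \<i> * iexp (- (t * b)) / complex_of_real t - \<i> * iexp (- (t * a)) / complex_of_real t"
  proof (rule interval_integral_FTC_finite)
    show "continuous_on {min a b..max a b} (\<lambda>x. iexp (- (t * x)))"
      by (intro continuous_intros)
    fix x
    show "((\<lambda>x. \<i> * iexp (- (t * x)) / complex_of_real t) has_vector_derivative iexp (- (t * x))) (at x within {min a b..max a b})"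
      using t by (rule iexp_lin_deriv)
  qed
  also have "\<dots> = (iexp (- (t * a)) - iexp (- (t * b))) / (\<i> * complex_of_real t)"
    using t by (simp add: field_simps)
  finally show ?thesis ..
qed

lemma K_bound:
  fixes a b t :: real
  assumes ab: "a \<le> b"
  shows "cmod ((iexp (- (t * a)) - iexp (- (t * b))) / (\<i> * complex_of_real t)) \<le> b - a"
proof (cases "t = 0")
  case True then show ?thesis using ab by simp
next
  case False
  have "(iexp (- (t * a)) - iexp (- (t * b))) / (\<i> * complex_of_real t)
      = (iexp ((- t) * b) - iexp ((- t) * a)) / (\<i> * complex_of_real (- t))"
    by (subst div_swap_c) simp
  also have "cmod \<dots> \<le> b - a" using Levy_Inversion_aux2[OF ab, of "- t"] False by simp
  finally show ?thesis .
qed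

context sA begin

definition ginv :: "real \<Rightarrow> complex" where
  "ginv x = (\<integral>t. iexp (- (t * x)) * char_fun f t \<partial>lborel)"

lemma ginv_cont: "isCont ginv x"
  unfolding continuous_at_sequentially
proof safe
  fix X assume X: "X \<longlonglongrightarrow> x"
  show "(ginv \<circ> X) \<longlonglongrightarrow> ginv x"
    unfolding comp_def ginv_def
    by (rule integral_dominated_convergence[where w="\<lambda>t. cmod (char_fun f t)"])
       (auto intro!: tendsto_intros X Phi_int simp: norm_mult norm_exp_eq_Re)
qed

lemma K_int_eq:
  assumes ab: "a \<le> b"
  shows "(\<integral>t. (iexp (- (t * a)) - iexp (- (t * b))) / (\<i> * complex_of_real t) * char_fun f t \<partial>lborel)
     = (\<integral>x. indicator {a..b} x *\<^sub>R ginv x \<partial>lborel)"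
proof -
  define F where "F t x = indicator {a..b} x *\<^sub>R (iexp (- (t * x)) * char_fun f t)" for t x
  have I: "integrable (lborel \<Otimes>\<^sub>M lborel) (\<lambda>(t,x). F t x)"
  proof (rule Bochner_Integration.integrable_bound)
    show "integrable (lborel \<Otimes>\<^sub>M lborel) (\<lambda>(t,x). cmod (char_fun f t) * indicator {a..b} x)"
      using Phi_int ab by (intro integrable_prod_real integrable_norm integrable_real_indicator) auto
    show "(\<lambda>(t,x). F t x) \<in> borel_measurable (lborel \<Otimes>\<^sub>M lborel)" unfolding F_def by measurable
    show "AE tx in lborel \<Otimes>\<^sub>M lborel. norm (case tx of (t,x) \<Rightarrow> F t x) \<le> norm (case tx of (t,x) \<Rightarrow> cmod (char_fun f t) * indicator {a..b} x)"
      by (intro AE_I2) (auto simp: F_def norm_mult norm_exp_eq_Re split: prod.splits split_indicator)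
  qed
  have "(\<integral>t. (iexp (- (t * a)) - iexp (- (t * b))) / (\<i> * complex_of_real t) * char_fun f t \<partial>lborel)
      = (\<integral>t. \<integral>x. F t x \<partial>lborel \<partial>lborel)"
  proof (rule integral_cong_AE)
    show "AE t in lborel. (iexp (- (t * a)) - iexp (- (t * b))) / (\<i> * complex_of_real t) * char_fun f t = (\<integral>x. F t x \<partial>lborel)"
      using AE_lborel_singleton[of 0]
    proof eventually_elim
      case (elim t)
      then show ?case unfolding F_def K_eq[OF ab elim]
        by (simp add: integral_mult_left_zero[symmetric] mult.assoc)
    qed
  qed (use I in \<open>auto intro!: lborel_pair.borel_measurable_lebesgue_integral\<close>)
  also have "\<dots> = (\<integral>x. \<integral>t. F t x \<partial>lborel \<partial>lborel)"
    using lborel_pair.Fubini_integral[OF I] by simp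
  also have "\<dots> = (\<integral>x. indicator {a..b} x *\<^sub>R ginv x \<partial>lborel)"
    unfolding F_def ginv_def by simp
  finally show ?thesis .
qed

end

lemma zero_interval:
  fixes h :: "real \<Rightarrow> real"
  assumes c: "\<And>x. isCont h x" and z: "\<And>a b. a \<le> b \<Longrightarrow> (\<integral>x. indicator {a..b} x * h x \<partial>lborel) = 0"
  shows "h x0 = 0"
proof -
  have pos: "\<not> k x0 > 0" if ck: "\<And>x. isCont k x" and zk: "\<And>a b. a \<le> b \<Longrightarrow> (\<integral>x. indicator {a..b} x * k x \<partial>lborel) = 0"
    for k :: "real \<Rightarrow> real"
  proof
    assume kp: "k x0 > 0"
    have "\<forall>\<^sub>F x in at x0. k x > k x0 / 2"
      using ck[of x0] kp unfolding isCont_def by (intro order_tendstoD) auto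
    then obtain d where d: "d > 0" and dk: "\<And>x. x \<noteq> x0 \<Longrightarrow> dist x x0 < d \<Longrightarrow> k x > k x0 / 2"
      unfolding eventually_at by auto
    define e where "e = d / 2"
    have e: "e > 0" using d by (simp add: e_def)
    have ke: "k x \<ge> k x0 / 2" if "x \<in> {x0 - e..x0 + e}" for x
    proof (cases "x = x0")
      case True then show ?thesis using kp by simp
    next
      case False
      have "dist x x0 < d" using that d by (auto simp: e_def dist_real_def)
      then show ?thesis using dk[OF False] by simp
    qed
    have int: "integrable lborel (\<lambda>x. k x * indicator {x0 - e..x0 + e} x)"
      by (rule borel_integrable_atLeastAtMost) (use ck in auto)
    have "(\<integral>x. indicator {x0 - e..x0 + e} x * (k x0 / 2) \<partial>lborel) \<le> (\<integral>x. indicator {x0 - e..x0 + e} x * k x \<partial>lborel)"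
    proof (rule integral_mono)
      show "integrable lborel (\<lambda>x. indicator {x0 - e..x0 + e} x * (k x0 / 2))"
        using e by (intro integrable_mult_left integrable_real_indicator) auto
      show "integrable lborel (\<lambda>x. indicator {x0 - e..x0 + e} x * k x)"
        using int by (simp add: mult.commute)
    qed (use ke in \<open>auto split: split_indicator\<close>)
    also have "\<dots> = 0" using zk[of "x0 - e" "x0 + e"] e by simp
    finally have "(\<integral>x. indicator {x0 - e..x0 + e} x * (k x0 / 2) \<partial>lborel) \<le> 0" .
    moreover have "(\<integral>x. indicator {x0 - e..x0 + e} x * (k x0 / 2) \<partial>lborel) = 2 * e * (k x0 / 2)"
      using e by simp
    ultimately show False using e kp by (simp add: mult_pos_pos) (metis mult_pos_pos not_le)
  qed
  have "\<not> h x0 > 0" by (rule pos) (use c z in auto)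
  moreover have "\<not> (- h x0) > 0"
    by (rule pos[of "\<lambda>x. - h x"]) (use c z in \<open>auto intro!: continuous_intros\<close>)
  ultimately show ?thesis by simp
qed

context sA begin

lemma Mf_point: "measure (density lborel f) {c} = 0"
proof -
  have fm[measurable]: "f \<in> borel_measurable borel" using pd_facts[OF pdf] by simp
  have "emeasure (density lborel f) {c} = (\<integral>\<^sup>+x. ennreal (f x) * indicator {c} x \<partial>lborel)"
    by (rule emeasure_density) auto
  also have "\<dots> = 0"
  proof (subst nn_integral_0_iff_AE)
    show "AE x in lborel. ennreal (f x) * indicator {c} x = 0"
      by (rule eventually_mono[OF AE_lborel_singleton[of c]]) (auto split: split_indicator)
  qed measurable
  finally show ?thesis by (simp add: measure_def)
qed

lemma Mf_int:
  assumes ab: "a \<le> b"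
  shows "measure (density lborel f) {a<..b} = (\<integral>x. indicator {a..b} x * f x \<partial>lborel)"
proof -
  have fm[measurable]: "f \<in> borel_measurable borel" using pd_facts[OF pdf] by simp
  have fi: "integrable lborel (\<lambda>x. indicator {a..b} x * f x)"
    using pd_facts(3)[OF pdf] by (intro integrable_ind_mult) auto
  have "emeasure (density lborel f) {a<..b} = (\<integral>\<^sup>+x. ennreal (f x) * indicator {a<..b} x \<partial>lborel)"
    by (rule emeasure_density) auto
  also have "\<dots> = (\<integral>\<^sup>+x. ennreal (indicator {a..b} x * f x) \<partial>lborel)"
    by (intro nn_integral_cong_AE, rule eventually_mono[OF AE_lborel_singleton[of a]]) (auto split: split_indicator)
  also have "\<dots> = ennreal (\<integral>x. indicator {a..b} x * f x \<partial>lborel)"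
    using fi pd_facts(2)[OF pdf] by (intro nn_integral_eq_integral) auto
  finally show ?thesis
    using pd_facts(2)[OF pdf] by (simp add: measure_def integral_nonneg_AE)
qed

lemma levy_lim:
  assumes ab: "a \<le> b"
  shows "(\<lambda>T::nat. CLBINT t=ereal (real_of_int (- int T))..ereal (real T).
            (iexp (- (t * a)) - iexp (- (t * b))) / (\<i> * complex_of_real t) * char_fun f t)
     \<longlonglongrightarrow> (\<integral>t. (iexp (- (t * a)) - iexp (- (t * b))) / (\<i> * complex_of_real t) * char_fun f t \<partial>lborel)"
proof -
  define G where "G t = (iexp (- (t * a)) - iexp (- (t * b))) / (\<i> * complex_of_real t) * char_fun f t" for t
  have eq: "(CLBINT t=ereal (real_of_int (- int T))..ereal (real T). G t)
      = (\<integral>t. indicator {- real T<..<real T} t *\<^sub>R G t \<partial>lborel)" for T :: nat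
    by (simp add: interval_lebesgue_integral_def set_lebesgue_integral_def einterval_def greaterThanLessThan_def greaterThan_def lessThan_def Collect_conj_eq[symmetric])
  have "(\<lambda>T::nat. \<integral>t. indicator {- real T<..<real T} t *\<^sub>R G t \<partial>lborel) \<longlonglongrightarrow> (\<integral>t. G t \<partial>lborel)"
  proof (rule integral_dominated_convergence[where w="\<lambda>t. (b - a) * cmod (char_fun f t)"])
    show "G \<in> borel_measurable lborel" unfolding G_def by measurable
    show "\<And>i. (\<lambda>t. indicator {- real i<..<real i} t *\<^sub>R G t) \<in> borel_measurable lborel" unfolding G_def by measurable
    show "integrable lborel (\<lambda>t. (b - a) * cmod (char_fun f t))" using Phi_int by auto
    show "AE t in lborel. (\<lambda>i. indicator {- real i<..<real i} t *\<^sub>R G t) \<longlonglongrightarrow> G t"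
    proof (intro AE_I2)
      fix t :: real
      obtain N :: nat where N: "\<bar>t\<bar> < real N" using reals_Archimedean2 by blast
      have "\<forall>\<^sub>F i in sequentially. indicator {- real i<..<real i} t *\<^sub>R G t = G t"
        unfolding eventually_sequentially
        by (rule exI[of _ N]) (use N in \<open>auto split: split_indicator\<close>)
      then show "(\<lambda>i. indicator {- real i<..<real i} t *\<^sub>R G t) \<longlonglongrightarrow> G t"
        by (rule tendsto_eventually)
    qed
    show "AE t in lborel. norm (indicator {- real i<..<real i} t *\<^sub>R G t) \<le> (b - a) * cmod (char_fun f t)" for i
    proof (intro AE_I2)
      fix t
      have "norm (indicator {- real i<..<real i} t *\<^sub>R G t) \<le> norm (G t)" by (auto split: split_indicator)
      also have "\<dots> \<le> (b - a) * cmod (char_fun f t)"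
        unfolding G_def norm_mult by (intro mult_right_mono K_bound ab) auto
      finally show "norm (indicator {- real i<..<real i} t *\<^sub>R G t) \<le> (b - a) * cmod (char_fun f t)" .
    qed
  qed
  then show ?thesis unfolding G_def[symmetric] eq .
qed

lemma ginv_bound: "cmod (ginv x) \<le> (\<integral>t. cmod (char_fun f t) \<partial>lborel)"
  unfolding ginv_def by (rule ft_bound)

lemma ginv_meas[measurable]: "ginv \<in> borel_measurable borel"
  by (intro borel_measurable_continuous_onI continuous_at_imp_continuous_on ballI ginv_cont)

lemma interval_identity:
  assumes ab: "a \<le> b"
  shows "complex_of_real (\<integral>x. indicator {a..b} x * f x \<partial>lborel)
     = complex_of_real (1 / (2 * pi)) * (\<integral>x. indicator {a..b} x *\<^sub>R ginv x \<partial>lborel)"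
proof -
  have rd: "real_distribution (density lborel f)" by (rule pd_rd[OF pdf])
  have ch: "char (density lborel f) = char_fun f" using pd_char[OF pdf] by simp
  note L1 = real_distribution.Levy_Inversion[OF rd ab Mf_point Mf_point, unfolded ch]
  have L2: "(\<lambda>T::nat. complex_of_real (1 / (2 * pi)) * (CLBINT t=ereal (real_of_int (- int T))..ereal (real T).
            (iexp (- (t * a)) - iexp (- (t * b))) / (\<i> * complex_of_real t) * char_fun f t))
     \<longlonglongrightarrow> complex_of_real (1 / (2 * pi)) * (\<integral>t. (iexp (- (t * a)) - iexp (- (t * b))) / (\<i> * complex_of_real t) * char_fun f t \<partial>lborel)"
    by (intro tendsto_mult tendsto_const levy_lim ab)
  from LIMSEQ_unique[OF L1 L2] show ?thesis
    using Mf_int[OF ab] K_int_eq[OF ab] by simp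
qed

lemma inversion: "complex_of_real (f x) = complex_of_real (1 / (2 * pi)) * ginv x"
proof -
  define N where "N = (\<integral>t. cmod (char_fun f t) \<partial>lborel)"
  have fcx: "isCont f y" for y using fcont by (simp add: continuous_on_eq_continuous_at)
  have fm[measurable]: "f \<in> borel_measurable borel" using pd_facts[OF pdf] by simp
  have intB: "integrable lborel (\<lambda>x. indicator {a..b} x *\<^sub>R ginv x)" if "a \<le> b" for a b
  proof (rule Bochner_Integration.integrable_bound)
    show "integrable lborel (\<lambda>x. indicator {a..b} x * N :: real)"
      using that by (intro integrable_mult_left integrable_real_indicator) auto
    show "AE x in lborel. norm (indicator {a..b} x *\<^sub>R ginv x) \<le> norm (indicator {a..b} x * N)"
      using ginv_bound unfolding N_def[symmetric]
      by (intro AE_I2) (auto split: split_indicator simp: N_def intro: order.trans[OF _ abs_ge_self])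
  qed measurable
  have intRe: "integrable lborel (\<lambda>x. indicator {a..b} x * Re (ginv x))" if "a \<le> b" for a b
    using integrable_Re[OF intB[OF that]] by simp
  have intIm: "integrable lborel (\<lambda>x. indicator {a..b} x * Im (ginv x))" if "a \<le> b" for a b
    using integrable_Im[OF intB[OF that]] by simp
  have intf: "integrable lborel (\<lambda>x. indicator {a..b} x * f x)" for a b
    using pd_facts(3)[OF pdf] by (intro integrable_ind_mult) auto
  have ReB: "Re (\<integral>x. indicator {a..b} x *\<^sub>R ginv x \<partial>lborel) = (\<integral>x. indicator {a..b} x * Re (ginv x) \<partial>lborel)" if "a \<le> b" for a b
    using integral_Re[OF intB[OF that]] by simp
  have ImB: "Im (\<integral>x. indicator {a..b} x *\<^sub>R ginv x \<partial>lborel) = (\<integral>x. indicator {a..b} x * Im (ginv x) \<partial>lborel)" if "a \<le> b" for a b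
    using integral_Im[OF intB[OF that]] by simp
  have h1: "f x - Re (ginv x) / (2 * pi) = 0"
  proof (rule zero_interval[of "\<lambda>x. f x - Re (ginv x) / (2 * pi)"])
    show "isCont (\<lambda>x. f x - Re (ginv x) / (2 * pi)) y" for y
      by (intro continuous_intros fcx continuous_Re[OF ginv_cont]) simp
    fix a b :: real assume ab: "a \<le> b"
    have e: "(\<integral>x. indicator {a..b} x * f x \<partial>lborel) = 1 / (2 * pi) * (\<integral>x. indicator {a..b} x * Re (ginv x) \<partial>lborel)"
      using arg_cong[OF interval_identity[OF ab], of Re] ReB[OF ab] by simp
    have "(\<integral>x. indicator {a..b} x * (f x - Re (ginv x) / (2 * pi)) \<partial>lborel)
        = (\<integral>x. indicator {a..b} x * f x - (indicator {a..b} x * Re (ginv x)) / (2 * pi) \<partial>lborel)"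
      by (simp add: algebra_simps)
    also have "\<dots> = (\<integral>x. indicator {a..b} x * f x \<partial>lborel) - (\<integral>x. indicator {a..b} x * Re (ginv x) \<partial>lborel) / (2 * pi)"
      using intf intRe[OF ab] by simp
    also have "\<dots> = 0" using e by simp
    finally show "(\<integral>x. indicator {a..b} x * (f x - Re (ginv x) / (2 * pi)) \<partial>lborel) = 0" .
  qed
  have h2: "Im (ginv x) = 0"
  proof (rule zero_interval[of "\<lambda>x. Im (ginv x)"])
    show "isCont (\<lambda>x. Im (ginv x)) y" for y
      by (rule continuous_Im[OF ginv_cont])
    fix a b :: real assume ab: "a \<le> b"
    show "(\<integral>x. indicator {a..b} x * Im (ginv x) \<partial>lborel) = 0"
      using arg_cong[OF interval_identity[OF ab], of Im] ImB[OF ab] by simp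
  qed
  show ?thesis using h1 h2 by (simp add: complex_eq_iff)
qed

end

locale sB = sA +
  fixes fe :: "real \<Rightarrow> real"
  assumes pdfe: "prob_density fe"
    and ae_ne: "AE u in lborel. char_fun fe u \<noteq> 0"
    and L2: "\<forall>h > 0. integrable lborel (\<lambda>u. (cmod (PhiK fe h u))\<^sup>2)"
begin

lemma fm[measurable]: "f \<in> borel_measurable borel" using pd_facts[OF pdf] by simp
lemma fem[measurable]: "fe \<in> borel_measurable borel" using pd_facts[OF pdfe] by simp
lemma Phie_meas[measurable]: "char_fun fe \<in> borel_measurable borel" using pd_char_facts(1)[OF pdfe] .

lemma PhiK_meas[measurable]: "(\<lambda>u. PhiK fe h u) \<in> borel_measurable borel"
  unfolding PhiK_def by measurable

lemma PhiK_int: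
  assumes h: "h > 0"
  shows "integrable lborel (PhiK fe h)"
proof (rule Bochner_Integration.integrable_bound)
  show "integrable lborel (\<lambda>u. (indicator {-1..1} u + (cmod (PhiK fe h u))\<^sup>2) / 2 :: real)"
    using L2 h by (intro integrable_divide integrable_add integrable_real_indicator) auto
  show "AE u in lborel. norm (PhiK fe h u) \<le> norm ((indicator {-1..1} u + (cmod (PhiK fe h u))\<^sup>2) / 2 :: real)"
  proof (intro AE_I2)
    fix u
    have a: "cmod z \<le> (1 + (cmod z)\<^sup>2) / 2" for z
    proof -
      have "0 \<le> (cmod z - 1)\<^sup>2" by simp
      then show ?thesis by (simp add: power2_eq_square algebra_simps)
    qed
    show "norm (PhiK fe h u) \<le> norm ((indicator {-1..1} u + (cmod (PhiK fe h u))\<^sup>2) / 2 :: real)"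
      using a[of "PhiK fe h u"] by (auto simp: PhiK_def split: split_indicator)
  qed
qed measurable

lemma psY: "prob_space (law_Y f fe)"
proof -
  have "prob_space (density lborel f \<Otimes>\<^sub>M density lborel fe)"
    using pd_rd[OF pdf] pd_rd[OF pdfe] by (intro prob_space_pair) (auto simp: real_distribution_def)
  then show ?thesis unfolding law_Y_def by (rule prob_space.prob_space_distr) measurable
qed

lemma sets_Y[measurable_cong]: "sets (law_Y f fe) = sets borel"
  unfolding law_Y_def by simp

lemma char_Y: "(\<integral>y. iexp (t * y) \<partial>law_Y f fe) = char_fun f t * char_fun fe t"
proof -
  interpret P: pair_prob_space "density lborel f" "density lborel fe"
    using pd_rd[OF pdf] pd_rd[OF pdfe] unfolding pair_prob_space_def pair_sigma_finite_def real_distribution_def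
    by (auto intro: prob_space_imp_sigma_finite)
  have "(\<integral>y. iexp (t * y) \<partial>law_Y f fe) = (\<integral>p. iexp (t * (fst p + snd p)) \<partial>(density lborel f \<Otimes>\<^sub>M density lborel fe))"
    unfolding law_Y_def by (subst integral_distr) (auto simp: case_prod_beta)
  also have "\<dots> = (\<integral>x. \<integral>e. iexp (t * (x + e)) \<partial>density lborel fe \<partial>density lborel f)"
  proof (subst P.integral_fst'[symmetric])
    show "integrable (density lborel f \<Otimes>\<^sub>M density lborel fe) (\<lambda>p. iexp (t * (fst p + snd p)))"
      by (rule P.P.integrable_const_bound[where B=1]) (auto simp: norm_exp_eq_Re)
  qed simp
  also have "\<dots> = (\<integral>x. iexp (t * x) * char (density lborel fe) t \<partial>density lborel f)"
    unfolding char_def by (simp add: distrib_left exp_add integral_mult_right_zero)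
  also have "\<dots> = char (density lborel f) t * char (density lborel fe) t"
    unfolding char_def[of "density lborel f"] by (simp add: integral_mult_left_zero)
  finally show ?thesis using pd_char[OF pdf] pd_char[OF pdfe] by simp
qed

lemma Efhat_eq:
  assumes h: "h > 0"
  shows "E_fhat f fe h x = complex_of_real (1 / (2 * pi)) *
     (\<integral>v. indicator {v. \<bar>v\<bar> \<le> 1 / h} v *\<^sub>R (iexp (- (v * x)) * char_fun f v) \<partial>lborel)"
proof -
  interpret Y: prob_space "law_Y f fe" by (rule psY)
  interpret PY: pair_sigma_finite "law_Y f fe" lborel
    by (simp add: pair_sigma_finite_def Y.sigma_finite_measure_axioms lborel.sigma_finite_measure_axioms)
  define F where "F y u = exp (- \<i> * complex_of_real (u * ((x - y) / h))) * PhiK fe h u" for y u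
  have IF: "integrable (law_Y f fe \<Otimes>\<^sub>M lborel) (\<lambda>(y,u). F y u)"
  proof (rule PY.Fubini_integrable)
    show "(\<lambda>(y,u). F y u) \<in> borel_measurable (law_Y f fe \<Otimes>\<^sub>M lborel)" unfolding F_def by measurable
    have "(\<lambda>y. \<integral>u. norm (case (y, u) of (y, u) \<Rightarrow> F y u) \<partial>lborel) = (\<lambda>y. \<integral>u. cmod (PhiK fe h u) \<partial>lborel)"
      by (auto simp: F_def norm_mult norm_exp_eq_Re)
    then show "integrable (law_Y f fe) (\<lambda>y. \<integral>u. norm (case (y, u) of (y, u) \<Rightarrow> F y u) \<partial>lborel)"
      by simp
    show "AE y in law_Y f fe. integrable lborel (\<lambda>u. case (y, u) of (y, u) \<Rightarrow> F y u)"
    proof (intro AE_I2)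
      fix y
      show "integrable lborel (\<lambda>u. case (y, u) of (y, u) \<Rightarrow> F y u)"
      proof (rule Bochner_Integration.integrable_bound)
        show "integrable lborel (PhiK fe h)" by (rule PhiK_int[OF h])
        show "AE u in lborel. norm (case (y, u) of (y, u) \<Rightarrow> F y u) \<le> norm (PhiK fe h u)"
          by (auto simp: F_def norm_mult norm_exp_eq_Re)
      qed (simp add: F_def)
    qed
  qed
  have Kn_eq: "Kn fe h ((x - y) / h) = complex_of_real (1 / (2 * pi)) * (\<integral>u. F y u \<partial>lborel)" for y
    unfolding Kn_def F_def ..
  have "(\<integral>y. Kn fe h ((x - y) / h) \<partial>law_Y f fe) = complex_of_real (1 / (2 * pi)) * (\<integral>y. \<integral>u. F y u \<partial>lborel \<partial>law_Y f fe)"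
    unfolding Kn_eq by (rule integral_mult_right_zero)
  also have "(\<integral>y. \<integral>u. F y u \<partial>lborel \<partial>law_Y f fe) = (\<integral>u. \<integral>y. F y u \<partial>law_Y f fe \<partial>lborel)"
    using PY.Fubini_integral[OF IF] by simp
  also have "\<dots> = (\<integral>u. iexp (- (u * x / h)) * PhiK fe h u * (char_fun f (u / h) * char_fun fe (u / h)) \<partial>lborel)"
  proof (intro Bochner_Integration.integral_cong refl)
    fix u
    have "F y u = iexp (- (u * x / h)) * PhiK fe h u * iexp ((u / h) * y)" for y
      unfolding F_def by (simp add: exp_add[symmetric] algebra_simps diff_divide_distrib)
    then have "(\<integral>y. F y u \<partial>law_Y f fe) = iexp (- (u * x / h)) * PhiK fe h u * (\<integral>y. iexp ((u / h) * y) \<partial>law_Y f fe)"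
      by (simp add: integral_mult_right_zero)
    then show "(\<integral>y. F y u \<partial>law_Y f fe) = iexp (- (u * x / h)) * PhiK fe h u * (char_fun f (u / h) * char_fun fe (u / h))"
      using char_Y[of "u / h"] by simp
  qed
  also have "\<dots> = \<bar>h\<bar> *\<^sub>R (\<integral>v. iexp (- ((0 + h * v) * x / h)) * PhiK fe h (0 + h * v) * (char_fun f ((0 + h * v) / h) * char_fun fe ((0 + h * v) / h)) \<partial>lborel)"
    using h by (intro lborel_integral_real_affine) simp
  also have "(\<integral>v. iexp (- ((0 + h * v) * x / h)) * PhiK fe h (0 + h * v) * (char_fun f ((0 + h * v) / h) * char_fun fe ((0 + h * v) / h)) \<partial>lborel)
      = (\<integral>v. indicator {v. \<bar>v\<bar> \<le> 1 / h} v *\<^sub>R (iexp (- (v * x)) * char_fun f v) \<partial>lborel)"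
  proof (rule integral_cong_AE)
    show "AE v in lborel. iexp (- ((0 + h * v) * x / h)) * PhiK fe h (0 + h * v) * (char_fun f ((0 + h * v) / h) * char_fun fe ((0 + h * v) / h))
        = indicator {v. \<bar>v\<bar> \<le> 1 / h} v *\<^sub>R (iexp (- (v * x)) * char_fun f v)"
    proof (rule eventually_mono[OF ae_ne])
      fix v assume ne: "char_fun fe v \<noteq> 0"
      have hv: "h * v / h = v" using h by simp
      have abs_iff: "\<bar>h * v\<bar> \<le> 1 \<longleftrightarrow> \<bar>v\<bar> \<le> 1 / h" using h by (simp add: abs_mult field_simps)
      show "iexp (- ((0 + h * v) * x / h)) * PhiK fe h (0 + h * v) * (char_fun f ((0 + h * v) / h) * char_fun fe ((0 + h * v) / h))
        = indicator {v. \<bar>v\<bar> \<le> 1 / h} v *\<^sub>R (iexp (- (v * x)) * char_fun f v)"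
        using ne h unfolding PhiK_def hv abs_iff by (auto simp: field_simps abs_mult split: split_indicator)
    qed
    show "(\<lambda>v. iexp (- ((0 + h * v) * x / h)) * PhiK fe h (0 + h * v) * (char_fun f ((0 + h * v) / h) * char_fun fe ((0 + h * v) / h))) \<in> borel_measurable lborel"
      by measurable
    show "(\<lambda>v. indicator {v. \<bar>v\<bar> \<le> 1 / h} v *\<^sub>R (iexp (- (v * x)) * char_fun f v)) \<in> borel_measurable lborel"
      by measurable
  qed
  finally have "(\<integral>y. Kn fe h ((x - y) / h) \<partial>law_Y f fe) = complex_of_real (1 / (2 * pi)) *
      (h *\<^sub>R (\<integral>v. indicator {v. \<bar>v\<bar> \<le> 1 / h} v *\<^sub>R (iexp (- (v * x)) * char_fun f v) \<partial>lborel))"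
    using h by simp
  then show ?thesis unfolding E_fhat_def using h by (simp add: scaleR_conv_of_real field_simps)
qed

end

lemma Hf_inv:
  assumes h: "h > 0"
  shows "Hf c r (1 / h) = h powr (r - 1) * exp (- c / h powr r) / (c * r)"
proof -
  have "(1 / h) powr (1 - r) = h powr (r - 1)"
    using h by (simp add: powr_divide powr_minus_divide[symmetric])
  moreover have "(1 / h) powr r = 1 / h powr r"
    using h by (simp add: powr_divide)
  ultimately show ?thesis unfolding Hf_def by simp
qed

lemma powr_inv_neg: "(h::real) > 0 \<Longrightarrow> (1 / h) powr (- r) = h powr r"
  by (simp add: powr_minus_divide powr_divide)

context sB begin

definition psi :: "real \<Rightarrow> real \<Rightarrow> complex" where
  "psi h v = indicator {v. 1 / h < \<bar>v\<bar>} v *\<^sub>R char_fun f v"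

lemma psi_meas[measurable]: "psi h \<in> borel_measurable borel"
  unfolding psi_def by measurable

lemma psi_int: "integrable lborel (psi h)"
  unfolding psi_def using Phi_int by (intro integrable_mult_indicator) auto

lemma iPhi_int: "integrable lborel (\<lambda>v. iexp (- (v * x)) * char_fun f v)"
proof (rule Bochner_Integration.integrable_bound)
  show "integrable lborel (char_fun f)" by (rule Phi_int)
qed (auto simp: norm_mult norm_exp_eq_Re)

lemma diff_eq:
  assumes h: "h > 0"
  shows "E_fhat f fe h x - complex_of_real (f x) = - (complex_of_real (1 / (2 * pi)) * (\<integral>v. iexp (- (v * x)) * psi h v \<partial>lborel))"
proof -
  have i1: "integrable lborel (\<lambda>v. indicator {v. \<bar>v\<bar> \<le> 1 / h} v *\<^sub>R (iexp (- (v * x)) * char_fun f v))"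
    using iPhi_int by (intro integrable_mult_indicator) auto
  have i2: "integrable lborel (\<lambda>v. iexp (- (v * x)) * psi h v)"
  proof (rule Bochner_Integration.integrable_bound)
    show "integrable lborel (psi h)" by (rule psi_int)
  qed (auto simp: norm_mult norm_exp_eq_Re)
  have "ginv x = (\<integral>v. indicator {v. \<bar>v\<bar> \<le> 1 / h} v *\<^sub>R (iexp (- (v * x)) * char_fun f v) + iexp (- (v * x)) * psi h v \<partial>lborel)"
    unfolding ginv_def by (intro Bochner_Integration.integral_cong refl) (auto simp: psi_def split: split_indicator)
  also have "\<dots> = (\<integral>v. indicator {v. \<bar>v\<bar> \<le> 1 / h} v *\<^sub>R (iexp (- (v * x)) * char_fun f v) \<partial>lborel) + (\<integral>v. iexp (- (v * x)) * psi h v \<partial>lborel)"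
    using i1 i2 by (rule Bochner_Integration.integral_add)
  finally have g: "ginv x = \<dots>" .
  show ?thesis
    unfolding Efhat_eq[OF h] inversion g by (simp add: algebra_simps)
qed

lemma cmod_diff:
  assumes h: "h > 0"
  shows "cmod (E_fhat f fe h x - complex_of_real (f x)) = (1 / (2 * pi)) * cmod (\<integral>v. iexp (- (v * x)) * psi h v \<partial>lborel)"
  unfolding diff_eq[OF h] norm_minus_cancel norm_mult norm_of_real by simp

lemma part1:
  assumes h: "h > 0" and kq: "kk * h powr r < 1"
  shows "(cmod (E_fhat f fe h x - complex_of_real (f x)))\<^sup>2
     \<le> L / (2 * pi * \<alpha> * r) * h powr (r - 1) * exp (- 2 * \<alpha> / h powr r) * (1 / (1 - kk * h powr r))"
proof -
  define H where "H = Hf (2 * \<alpha>) r (1 / h)"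
  define q where "q = 1 - kk * h powr r"
  have q: "q > 0" using kq by (simp add: q_def)
  have A: "1 / h > 0" using h by simp
  have kq': "kk * (1 / h) powr (- r) < 1" using kq h by (simp add: powr_inv_neg)
  have "cmod (\<integral>v. iexp (- (v * x)) * psi h v \<partial>lborel) \<le> (\<integral>v. cmod (iexp (- (v * x)) * psi h v) \<partial>lborel)"
    by (rule integral_norm_bound)
  also have "\<dots> = (\<integral>v. indicator {v. 1 / h < \<bar>v\<bar>} v * cmod (char_fun f v) \<partial>lborel)"
    by (intro Bochner_Integration.integral_cong refl) (auto simp: psi_def norm_mult norm_exp_eq_Re split: split_indicator)
  also have "\<dots> \<le> sqrt (2 * pi * L * (2 * (H / q)))"
    using Phi_tail[OF A kq'] h unfolding H_def q_def by (simp add: powr_inv_neg)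
  finally have b: "cmod (\<integral>v. iexp (- (v * x)) * psi h v \<partial>lborel) \<le> sqrt (2 * pi * L * (2 * (H / q)))" .
  have H0: "0 \<le> H" unfolding H_def Hf_def using h alpha r by (auto intro!: divide_nonneg_nonneg mult_nonneg_nonneg)
  have "(cmod (E_fhat f fe h x - complex_of_real (f x)))\<^sup>2 = (1 / (2 * pi))\<^sup>2 * (cmod (\<integral>v. iexp (- (v * x)) * psi h v \<partial>lborel))\<^sup>2"
    unfolding cmod_diff[OF h] by (rule power_mult_distrib)
  also have "\<dots> \<le> (1 / (2 * pi))\<^sup>2 * (sqrt (2 * pi * L * (2 * (H / q))))\<^sup>2"
    by (intro mult_left_mono power_mono b) auto
  also have "(sqrt (2 * pi * L * (2 * (H / q))))\<^sup>2 = 2 * pi * L * (2 * (H / q))"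
    using L H0 q by (intro real_sqrt_pow2) auto
  also have "(1 / (2 * pi))\<^sup>2 * (2 * pi * L * (2 * (H / q)))
      = L / (2 * pi * \<alpha> * r) * h powr (r - 1) * exp (- 2 * \<alpha> / h powr r) * (1 / (1 - kk * h powr r))"
    unfolding H_def Hf_inv[OF h] q_def[symmetric] using alpha r q
    by (simp add: field_simps power2_eq_square)
  finally show ?thesis .
qed

lemma part2:
  assumes h: "h > 0"
  shows "(\<integral>\<^sup>+x. ennreal ((cmod (E_fhat f fe h x - complex_of_real (f x)))\<^sup>2) \<partial>lborel)
     \<le> ennreal (L * exp (- 2 * \<alpha> / h powr r))"
proof -
  define e where "e = exp (- 2 * \<alpha> / h powr r)"
  have e0: "e > 0" unfolding e_def by simp
  have "(\<integral>\<^sup>+x. ennreal ((cmod (E_fhat f fe h x - complex_of_real (f x)))\<^sup>2) \<partial>lborel)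
      = (\<integral>\<^sup>+x. ennreal ((1 / (2 * pi))\<^sup>2) * ennreal ((cmod (\<integral>v. iexp (- (v * x)) * psi h v \<partial>lborel))\<^sup>2) \<partial>lborel)"
    by (intro nn_integral_cong) (simp only: cmod_diff[OF h] power_mult_distrib, rule ennreal_mult, auto)
  also have "\<dots> = ennreal ((1 / (2 * pi))\<^sup>2) * (\<integral>\<^sup>+x. ennreal ((cmod (\<integral>v. iexp (- (v * x)) * psi h v \<partial>lborel))\<^sup>2) \<partial>lborel)"
  proof (rule nn_integral_cmult)
    have [measurable]: "(\<lambda>x. \<integral>v. iexp (- (v * x)) * psi h v \<partial>lborel) \<in> borel_measurable borel"
      by (rule ft_meas) measurable
    show "(\<lambda>x. ennreal ((cmod (\<integral>v. iexp (- (v * x)) * psi h v \<partial>lborel))\<^sup>2)) \<in> borel_measurable lborel"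
      by measurable
  qed
  also have "\<dots> \<le> ennreal ((1 / (2 * pi))\<^sup>2) * (ennreal (2 * pi) * (\<integral>\<^sup>+u. ennreal ((cmod (psi h u))\<^sup>2) \<partial>lborel))"
    by (intro mult_left_mono plancherel psi_int) auto
  also have "(\<integral>\<^sup>+u. ennreal ((cmod (psi h u))\<^sup>2) \<partial>lborel)
      \<le> (\<integral>\<^sup>+u. ennreal e * ennreal ((cmod (char_fun f u))\<^sup>2 * exp (2 * \<alpha> * (\<bar>u\<bar> powr r))) \<partial>lborel)"
  proof (intro nn_integral_mono)
    fix u
    show "ennreal ((cmod (psi h u))\<^sup>2) \<le> ennreal e * ennreal ((cmod (char_fun f u))\<^sup>2 * exp (2 * \<alpha> * (\<bar>u\<bar> powr r)))"
    proof (cases "1 / h < \<bar>u\<bar>")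
      case True
      have "(1 / h) powr r \<le> \<bar>u\<bar> powr r" using True h r by (intro powr_mono2) auto
      then have "2 * \<alpha> / h powr r \<le> 2 * \<alpha> * \<bar>u\<bar> powr r"
        using alpha h by (simp add: powr_divide divide_simps)
      then have "1 \<le> e * exp (2 * \<alpha> * (\<bar>u\<bar> powr r))"
        unfolding e_def by (simp add: exp_add[symmetric])
      then have "(cmod (char_fun f u))\<^sup>2 * 1 \<le> (cmod (char_fun f u))\<^sup>2 * (e * exp (2 * \<alpha> * (\<bar>u\<bar> powr r)))"
        by (intro mult_left_mono) auto
      then show ?thesis using True e0
        by (simp add: psi_def ennreal_mult[symmetric] mult_ac ennreal_leI)
    qed (simp add: psi_def)
  qed
  also have "\<dots> = ennreal e * (\<integral>\<^sup>+u. ennreal ((cmod (char_fun f u))\<^sup>2 * exp (2 * \<alpha> * (\<bar>u\<bar> powr r))) \<partial>lborel)"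
    by (rule nn_integral_cmult) measurable
  also have "\<dots> \<le> ennreal e * ennreal (2 * pi * L)"
    by (intro mult_left_mono wL2_nn) auto
  finally have "(\<integral>\<^sup>+x. ennreal ((cmod (E_fhat f fe h x - complex_of_real (f x)))\<^sup>2) \<partial>lborel)
      \<le> ennreal ((1 / (2 * pi))\<^sup>2) * (ennreal (2 * pi) * (ennreal e * ennreal (2 * pi * L)))"
    by (simp add: mult_left_mono)
  also have "\<dots> = ennreal ((1 / (2 * pi))\<^sup>2 * (2 * pi * (e * (2 * pi * L))))"
    using e0 L by (metis ennreal_mult mult_nonneg_nonneg less_imp_le pi_ge_zero zero_le_power2 zero_le_numeral)
  also have "(1 / (2 * pi))\<^sup>2 * (2 * pi * (e * (2 * pi * L))) = L * e"
    by (simp add: field_simps power2_eq_square)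
  finally show ?thesis unfolding e_def .
qed

end

theorem proposition1:
  fixes \<alpha> r L :: real and f fe :: "real \<Rightarrow> real"
  assumes "\<alpha> > 0" and "r > 0" and "L > 0"
    and "f \<in> class_A \<alpha> r L"
    and "continuous_on UNIV f"
    and "prob_density fe"
    and "AE u in lborel. char_fun fe u \<noteq> 0"
    and "\<forall>h > 0. integrable lborel (\<lambda>u. (cmod (PhiK fe h u))\<^sup>2)"
  shows "(\<exists>g :: real \<Rightarrow> real. (g \<longlongrightarrow> 0) (at_right 0) \<and>
           (\<forall>\<^sub>F h in at_right 0. \<forall>x.
              (cmod (E_fhat f fe h x - complex_of_real (f x)))\<^sup>2
                \<le> L / (2 * pi * \<alpha> * r) * h powr (r - 1) * exp (- 2 * \<alpha> / h powr r) * (1 + g h)))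
         \<and> (\<forall>h > 0. (\<integral>\<^sup>+x. ennreal ((cmod (E_fhat f fe h x - complex_of_real (f x)))\<^sup>2) \<partial>lborel)
                  \<le> ennreal (L * exp (- 2 * \<alpha> / h powr r)))"
proof -
  interpret sB \<alpha> r L f fe
    using assms by unfold_locales auto
  have pr: "((\<lambda>h. h powr r) \<longlongrightarrow> 0) (at_right 0)" using r by real_asymp
  have kt: "((\<lambda>h. kk * h powr r) \<longlongrightarrow> 0) (at_right 0)"
    using tendsto_mult[OF tendsto_const pr, of kk] by simp
  define g where "g h = 1 / (1 - kk * h powr r) - 1" for h
  have gt: "(g \<longlongrightarrow> 0) (at_right 0)"
  proof -
    have "((\<lambda>h. 1 / (1 - kk * h powr r) - 1) \<longlongrightarrow> 1 / (1 - 0) - 1) (at_right 0)"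
      by (intro tendsto_intros kt) simp
    then show ?thesis unfolding g_def[abs_def] by simp
  qed
  have ev: "\<forall>\<^sub>F h in at_right 0. h > 0 \<and> kk * h powr r < 1"
  proof -
    have "\<forall>\<^sub>F h in at_right 0. kk * h powr r < 1" using kt by (rule order_tendstoD) simp
    moreover have "\<forall>\<^sub>F h in at_right (0::real). h > 0" by (simp add: eventually_at_right_less)
    ultimately show ?thesis by eventually_elim auto
  qed
  show ?thesis
  proof (intro conjI exI[of _ g] allI impI)
    show "(g \<longlongrightarrow> 0) (at_right 0)" by (rule gt)
    show "\<forall>\<^sub>F h in at_right 0. \<forall>x. (cmod (E_fhat f fe h x - complex_of_real (f x)))\<^sup>2
        \<le> L / (2 * pi * \<alpha> * r) * h powr (r - 1) * exp (- 2 * \<alpha> / h powr r) * (1 + g h)"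
      using ev
    proof eventually_elim
      case (elim h)
      then show ?case using part1[of h] by (simp add: g_def)
    qed
    fix h :: real assume "h > 0"
    then show "(\<integral>\<^sup>+x. ennreal ((cmod (E_fhat f fe h x - complex_of_real (f x)))\<^sup>2) \<partial>lborel)
        \<le> ennreal (L * exp (- 2 * \<alpha> / h powr r))" by (rule part2)
  qed
qed

end
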